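(* Assume that the set $\mathcal F$ of function symbols is a finite set of constants (so the Herbrand universe is finite), that the standing assumptions on constraints below hold, and that for every closed constraint $C$ it is decidable whether $\mathcal T\models C$. Then there exists an algorithm which, given a hybrid program $(P,\mathcal T)$ and a ground rule atom $A$, decides whether $(P,\mathcal T)\models_{\mathrm{wf}} A$ and whether $(P,\mathcal T)\models_{\mathrm{wf}}\neg A$.
   Context: Fix a first-order alphabet: a set $\mathcal F$ of function symbols containing at least one constant, a set of variables, and a set of predicate symbols partitioned into rule predicates $\mathcal P_R$ and constraint predicates $\mathcal P_C$. An external theory $\mathcal T$ is a set of first-order axioms over $\mathcal P_C$ and $\mathcal F$, with the standard 2-valued semantics (arbitrary, not necessarily Herbrand, models). A designated set of formulas over $\mathcal P_C,\mathcal F$ are called constraints; the constant $\mathbf{true}$ is a constraint. Standing assumptions on constraints: $=$ is a constraint predicate and $\mathcal T$ contains Clark's equality theory (equality axioms, $f(\bar x)=f(\bar y)\to\bar x=\bar y$, $f(\bar x)\neq g(\bar y)$ for distinct $f,g$, $x\neq t$ for non-variable $t$ containing $x$, and the weak domain closure axiom $\bigvee_{f\in\mathcal F}\exists\bar y\,(x=f(\bar y))$ when $\mathcal F$ is finite); equalities between terms are constraints, and the set of constraints is closed under $\wedge,\vee,\neg,\exists$. Rule atoms/literals are atoms/literals whose predicate is in $\mathcal P_R$. A hybrid rule is $H\leftarrow C,L_1,\dots,L_n$ ($n\ge 0$) with $H$ a rule atom, $L_i$ rule literals and $C$ a constraint (the constraint of the rule). A hybrid program is a pair $(P,\mathcal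 T)$ with $P$ a finite set of hybrid rules. The Herbrand base $\mathcal H$ is the set of ground rule atoms over $\mathcal F$. A ground instance of a rule is obtained by a substitution $\theta$ mapping all free variables of the rule to ground terms (bound variables of $C$ renamed apart as needed). For a model $M_0$ of $\mathcal T$, $P/M_0$ is the ground normal logic program consisting of all rules $H\theta\leftarrow L_1\theta,\dots,L_n\theta$ such that $H\theta\leftarrow C\theta,L_1\theta,\dots,L_n\theta$ is a ground instance of a rule of $P$ and $M_0\models C\theta$. The well-founded model $WF(Q)$ of a ground normal program $Q$ is the least fixpoint of the monotone operator $\Psi_Q(I)=(\mathcal M_{Q/_tI}\cap\mathcal H)\cup\neg(\mathcal H\setminus\mathcal M_{Q/_{tu}I})$ on sets $I\subseteq\mathcal H\cup\neg\mathcal H$ containing no complementary pair, where $\neg p$ is treated as a fresh predicate so that $Q$ is definite, $Q/_tI=Q\cup\{\neg A\mid\neg A\in I\}$, $Q/_{tu}I=Q\cup\{\neg A\mid A\in\mathcal H,A\notin I\}$, and $\mathcal M_R$ is the least Herbrand model of a definite program $R$ over $\mathcal H\cup\neg\mathcal H$. Such $I$ is a 3-valued interpretation: a ground literal is true if it is in $I$, false if its complement is in $I$, undefined otherwise, extended to formulas by Kleene 3-valued logic ($\models_3$). A formula $F$ over $\mathcal P_R,\mathcal F$ holds in the well-founded semantics, $(P,\mathcal T)\models_{\mathrm{wf}}F$, iff $WF(P/M_0)\models_3 F$ for every model $M_0$ of $\mathcal T$. *)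

theory Defs
  imports Main "HOL-Library.Nat_Bijection"
begin

datatype recf = Zero | Succ | Proj nat | Comp recf "recf list" | PrimRec recf recf | Mu recf

inductive recf_eval :: "recf \<Rightarrow> nat list \<Rightarrow> nat \<Rightarrow> bool" where
  zero: "recf_eval Zero xs 0"
| succ: "recf_eval Succ (x # xs) (Suc x)"
| proj: "n < length xs \<Longrightarrow> recf_eval (Proj n) xs (xs ! n)"
| comp: "length gs = length ys \<Longrightarrow> (\<forall>i<length gs. recf_eval (gs ! i) xs (ys ! i))
         \<Longrightarrow> recf_eval f ys z \<Longrightarrow> recf_eval (Comp f gs) xs z"
| prim0: "recf_eval f xs y \<Longrightarrow> recf_eval (PrimRec f g) (0 # xs) y"
| primS: "recf_eval (PrimRec f g) (n # xs) y \<Longrightarrow> recf_eval g (y # n # xs) z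
         \<Longrightarrow> recf_eval (PrimRec f g) (Suc n # xs) z"
| mu: "recf_eval f (n # xs) 0 \<Longrightarrow> (\<forall>m<n. \<exists>k. recf_eval f (m # xs) (Suc k))
         \<Longrightarrow> recf_eval (Mu f) xs n"

definition decidable_on :: "nat set \<Rightarrow> nat set \<Rightarrow> bool" where
  "decidable_on D S \<longleftrightarrow> (\<exists>f. \<forall>n\<in>D. recf_eval f [n] (if n \<in> S then 1 else 0))"

text \<open>Function symbols are constants (natural numbers), variables are natural numbers.\<close>
datatype trm = V nat | C nat

datatype fm = Tru | Eq trm trm | Atm nat "trm list" | Neg fm | Conj fm fm | Disj fm fm | Ex nat fm

datatype ratom = RA nat "trm list"
datatype lit = Pos ratom | NegL ratom

text \<open>A hybrid rule H <- C, L1, ..., Ln is a triple (H, C, [L1,...,Ln]); a program is a list of rules.\<close>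
type_synonym hrule = "ratom \<times> fm \<times> lit list"
type_synonym hprog = "hrule list"

fun trm_consts :: "trm \<Rightarrow> nat set" where
  "trm_consts (V x) = {}" | "trm_consts (C c) = {c}"

fun fm_consts :: "fm \<Rightarrow> nat set" where
  "fm_consts Tru = {}"
| "fm_consts (Eq s t) = trm_consts s \<union> trm_consts t"
| "fm_consts (Atm p ts) = (\<Union>t\<in>set ts. trm_consts t)"
| "fm_consts (Neg f) = fm_consts f"
| "fm_consts (Conj f g) = fm_consts f \<union> fm_consts g"
| "fm_consts (Disj f g) = fm_consts f \<union> fm_consts g"
| "fm_consts (Ex x f) = fm_consts f"

fun trm_vars :: "trm \<Rightarrow> nat set" where
  "trm_vars (V x) = {x}" | "trm_vars (C c) = {}"

fun fm_free :: "fm \<Rightarrow> nat set" where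
  "fm_free Tru = {}"
| "fm_free (Eq s t) = trm_vars s \<union> trm_vars t"
| "fm_free (Atm p ts) = (\<Union>t\<in>set ts. trm_vars t)"
| "fm_free (Neg f) = fm_free f"
| "fm_free (Conj f g) = fm_free f \<union> fm_free g"
| "fm_free (Disj f g) = fm_free f \<union> fm_free g"
| "fm_free (Ex x f) = fm_free f - {x}"

fun ratom_consts :: "ratom \<Rightarrow> nat set" where
  "ratom_consts (RA p ts) = (\<Union>t\<in>set ts. trm_consts t)"

fun lit_atom :: "lit \<Rightarrow> ratom" where
  "lit_atom (Pos a) = a" | "lit_atom (NegL a) = a"

definition rule_consts :: "hrule \<Rightarrow> nat set" where
  "rule_consts r = (case r of (h, c, b) \<Rightarrow>
     ratom_consts h \<union> fm_consts c \<union> (\<Union>l\<in>set b. ratom_consts (lit_atom l)))"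

definition ground_ratom :: "nat set \<Rightarrow> ratom \<Rightarrow> bool" where
  "ground_ratom F a \<longleftrightarrow> (case a of RA p ts \<Rightarrow> \<forall>t\<in>set ts. \<exists>c\<in>F. t = C c)"

definition herbrand_base :: "nat set \<Rightarrow> ratom set" where
  "herbrand_base F = {a. ground_ratom F a}"

fun trm_subst :: "(nat \<Rightarrow> trm) \<Rightarrow> trm \<Rightarrow> trm" where
  "trm_subst \<sigma> (V x) = \<sigma> x" | "trm_subst \<sigma> (C c) = C c"

text \<open>Substitution of free variables; bound variables are left untouched (the substituted
  terms are ground, so no capture can occur).\<close>
fun fm_subst :: "(nat \<Rightarrow> trm) \<Rightarrow> fm \<Rightarrow> fm" where
  "fm_subst \<sigma> Tru = Tru"
| "fm_subst \<sigma> (Eq s t) = Eq (trm_subst \<sigma> s) (trm_subst \<sigma> t)"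
| "fm_subst \<sigma> (Atm p ts) = Atm p (map (trm_subst \<sigma>) ts)"
| "fm_subst \<sigma> (Neg f) = Neg (fm_subst \<sigma> f)"
| "fm_subst \<sigma> (Conj f g) = Conj (fm_subst \<sigma> f) (fm_subst \<sigma> g)"
| "fm_subst \<sigma> (Disj f g) = Disj (fm_subst \<sigma> f) (fm_subst \<sigma> g)"
| "fm_subst \<sigma> (Ex x f) = Ex x (fm_subst (\<sigma>(x := V x)) f)"

fun ratom_subst :: "(nat \<Rightarrow> trm) \<Rightarrow> ratom \<Rightarrow> ratom" where
  "ratom_subst \<sigma> (RA p ts) = RA p (map (trm_subst \<sigma>) ts)"

fun lit_subst :: "(nat \<Rightarrow> trm) \<Rightarrow> lit \<Rightarrow> lit" where
  "lit_subst \<sigma> (Pos a) = Pos (ratom_subst \<sigma> a)"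
| "lit_subst \<sigma> (NegL a) = NegL (ratom_subst \<sigma> a)"

text \<open>A structure: interpretation of constants and of constraint predicates; = is identity.\<close>
type_synonym 'd struct = "(nat \<Rightarrow> 'd) \<times> (nat \<Rightarrow> 'd list \<Rightarrow> bool)"

fun trm_val :: "'d struct \<Rightarrow> (nat \<Rightarrow> 'd) \<Rightarrow> trm \<Rightarrow> 'd" where
  "trm_val M va (V x) = va x" | "trm_val M va (C c) = fst M c"

fun sat :: "'d struct \<Rightarrow> (nat \<Rightarrow> 'd) \<Rightarrow> fm \<Rightarrow> bool" where
  "sat M va Tru = True"
| "sat M va (Eq s t) = (trm_val M va s = trm_val M va t)"
| "sat M va (Atm p ts) = snd M p (map (trm_val M va) ts)"
| "sat M va (Neg f) = (\<not> sat M va f)"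
| "sat M va (Conj f g) = (sat M va f \<and> sat M va g)"
| "sat M va (Disj f g) = (sat M va f \<or> sat M va g)"
| "sat M va (Ex x f) = (\<exists>d. sat M (va(x := d)) f)"

definition holds :: "'d struct \<Rightarrow> fm \<Rightarrow> bool" where
  "holds M f \<longleftrightarrow> (\<forall>va. sat M va f)"

definition is_model :: "fm set \<Rightarrow> 'd struct \<Rightarrow> bool" where
  "is_model T M \<longleftrightarrow> (\<forall>f\<in>T. holds M f)"

definition entails :: "'d itself \<Rightarrow> fm set \<Rightarrow> fm \<Rightarrow> bool" where
  "entails _ T f \<longleftrightarrow> (\<forall>M :: 'd struct. is_model T M \<longrightarrow> holds M f)"

text \<open>Weak domain closure axiom for a finite set of constants listed by cs:
  forall x. x = c1 \<or> ... \<or> x = cn.\<close>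
definition dca :: "nat \<Rightarrow> nat list \<Rightarrow> fm" where
  "dca x cs = Neg (Ex x (Neg (foldr (\<lambda>c g. Disj (Eq (V x) (C c)) g) cs (Neg Tru))))"

type_synonym gprog = "(ratom \<times> lit list) set"

text \<open>Least Herbrand model of a definite program over H \<union> \<not>H (negative literals
  treated as fresh atoms).\<close>
definition least_model :: "(lit \<times> lit list) set \<Rightarrow> lit set" where
  "least_model R = \<Inter>{S. \<forall>h b. (h, b) \<in> R \<longrightarrow> set b \<subseteq> S \<longrightarrow> h \<in> S}"

definition prog_t :: "gprog \<Rightarrow> lit set \<Rightarrow> (lit \<times> lit list) set" where
  "prog_t Q I = {(Pos h, b) | h b. (h, b) \<in> Q} \<union> {(NegL a, []) | a. NegL a \<in> I}"

definition prog_tu :: "ratom set \<Rightarrow> gprog \<Rightarrow> lit set \<Rightarrow> (lit \<times> lit list) set" where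
  "prog_tu H Q I = {(Pos h, b) | h b. (h, b) \<in> Q} \<union> {(NegL a, []) | a. a \<in> H \<and> Pos a \<notin> I}"

definition Psi :: "ratom set \<Rightarrow> gprog \<Rightarrow> lit set \<Rightarrow> lit set" where
  "Psi H Q I = (least_model (prog_t Q I) \<inter> Pos ` H)
              \<union> NegL ` (H - {a. Pos a \<in> least_model (prog_tu H Q I)})"

definition consistent :: "ratom set \<Rightarrow> lit set \<Rightarrow> bool" where
  "consistent H I \<longleftrightarrow> I \<subseteq> Pos ` H \<union> NegL ` H \<and> \<not> (\<exists>a. Pos a \<in> I \<and> NegL a \<in> I)"

definition WF :: "ratom set \<Rightarrow> gprog \<Rightarrow> lit set" where
  "WF H Q = (THE I. consistent H I \<and> Psi H Q I = I
                  \<and> (\<forall>J. consistent H J \<and> Psi H Q J = J \<longrightarrow> I \<subseteq> J))"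

definition true3 :: "lit set \<Rightarrow> lit \<Rightarrow> bool" where
  "true3 I l \<longleftrightarrow> l \<in> I"

text \<open>P/M0: ground instances (free variables mapped to constants of F) whose constraint
  holds in M0, with the constraint removed.\<close>
definition reduct :: "nat set \<Rightarrow> hprog \<Rightarrow> 'd struct \<Rightarrow> gprog" where
  "reduct F P M = {(ratom_subst (C \<circ> \<theta>) h, map (lit_subst (C \<circ> \<theta>)) b) | h c b \<theta>.
      (h, c, b) \<in> set P \<and> range \<theta> \<subseteq> F \<and> holds M (fm_subst (C \<circ> \<theta>) c)}"

definition models_wf :: "'d itself \<Rightarrow> nat set \<Rightarrow> hprog \<Rightarrow> fm set \<Rightarrow> lit \<Rightarrow> bool" where
  "models_wf _ F P T L \<longleftrightarrow>
     (\<forall>M :: 'd struct. is_model T M \<longrightarrow> true3 (WF (herbrand_base F) (reduct F P M)) L)"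

fun enc_trm :: "trm \<Rightarrow> nat" where
  "enc_trm (V x) = prod_encode (0, x)"
| "enc_trm (C c) = prod_encode (1, c)"

fun enc_fm :: "fm \<Rightarrow> nat" where
  "enc_fm Tru = prod_encode (0, 0)"
| "enc_fm (Eq s t) = prod_encode (1, prod_encode (enc_trm s, enc_trm t))"
| "enc_fm (Atm p ts) = prod_encode (2, prod_encode (p, list_encode (map enc_trm ts)))"
| "enc_fm (Neg f) = prod_encode (3, enc_fm f)"
| "enc_fm (Conj f g) = prod_encode (4, prod_encode (enc_fm f, enc_fm g))"
| "enc_fm (Disj f g) = prod_encode (5, prod_encode (enc_fm f, enc_fm g))"
| "enc_fm (Ex x f) = prod_encode (6, prod_encode (x, enc_fm f))"

fun enc_ratom :: "ratom \<Rightarrow> nat" where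
  "enc_ratom (RA p ts) = prod_encode (p, list_encode (map enc_trm ts))"

fun enc_lit :: "lit \<Rightarrow> nat" where
  "enc_lit (Pos a) = prod_encode (0, enc_ratom a)"
| "enc_lit (NegL a) = prod_encode (1, enc_ratom a)"

definition enc_rule :: "hrule \<Rightarrow> nat" where
  "enc_rule r = (case r of (h, c, b) \<Rightarrow>
     prod_encode (enc_ratom h, prod_encode (enc_fm c, list_encode (map enc_lit b))))"

definition enc_input :: "hprog \<Rightarrow> ratom \<Rightarrow> nat" where
  "enc_input P A = prod_encode (list_encode (map enc_rule P), enc_ratom A)"

definition closed_constraints :: "nat set \<Rightarrow> fm set \<Rightarrow> fm set" where
  "closed_constraints F Constr = {c \<in> Constr. fm_free c = {} \<and> fm_consts c \<subseteq> F}"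

definition hybrid_program :: "nat set \<Rightarrow> fm set \<Rightarrow> hprog \<Rightarrow> bool" where
  "hybrid_program F Constr P \<longleftrightarrow>
     (\<forall>r\<in>set P. fst (snd r) \<in> Constr \<and> rule_consts r \<subseteq> F)"

definition valid_inputs :: "nat set \<Rightarrow> fm set \<Rightarrow> (hprog \<times> ratom) set" where
  "valid_inputs F Constr = {(P, A). hybrid_program F Constr P \<and> ground_ratom F A}"

end

theory Submission
  imports Defs "HOL-Library.Nat_Bijection"
begin


datatype ex = Z | S ex | Var nat | App ex "ex list" | Iter ex ex ex | Min ex

fun eval :: "ex \<Rightarrow> nat list \<Rightarrow> nat" where
  "eval Z xs = 0"
| "eval (S e) xs = Suc (eval e xs)"
| "eval (Var i) xs = xs ! i"
| "eval (App g es) xs = eval g (map (\<lambda>e. eval e xs) es)"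
| "eval (Iter en ei eb) xs = rec_nat (eval ei xs) (\<lambda>k v. eval eb (v # k # xs)) (eval en xs)"
| "eval (Min eb) xs = (LEAST m. eval eb (m # xs) = 0)"

fun wfe :: "nat \<Rightarrow> ex \<Rightarrow> bool" where
  "wfe n Z = True"
| "wfe n (S e) = wfe n e"
| "wfe n (Var i) = (i < n)"
| "wfe n (App g es) = (wfe (length es) g \<and> (\<forall>e\<in>set es. wfe n e))"
| "wfe n (Iter en ei eb) = (wfe n en \<and> wfe n ei \<and> wfe (Suc (Suc n)) eb)"
| "wfe n (Min eb) = (wfe (Suc n) eb \<and> (\<forall>xs. length xs = n \<longrightarrow> (\<exists>m. eval eb (m # xs) = 0)))"

definition comp_by :: "nat \<Rightarrow> recf \<Rightarrow> ex \<Rightarrow> bool" where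
  "comp_by n r e \<longleftrightarrow> (\<forall>xs. length xs = n \<longrightarrow> recf_eval r xs (eval e xs))"

lemma list_choice:
  assumes "\<forall>e\<in>set es. \<exists>r. P r e"
  shows "\<exists>rs. length rs = length es \<and> (\<forall>i<length es. P (rs ! i) (es ! i))"
  using assms
proof (induction es)
  case Nil then show ?case by simp
next
  case (Cons e es)
  then obtain r where "P r e" by auto
  moreover from Cons obtain rs where "length rs = length es" "\<forall>i<length es. P (rs ! i) (es ! i)" by auto
  ultimately show ?case
    by (intro exI[of _ "r # rs"]) (auto simp: nth_Cons split: nat.split)
qed

lemma primrec_eval:
  assumes "\<forall>xs. length xs = n \<longrightarrow> recf_eval ri xs (eval ei xs)"
    and "\<forall>xs. length xs = Suc (Suc n) \<longrightarrow> recf_eval rb xs (eval eb xs)"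
    and "length xs = n"
  shows "recf_eval (PrimRec ri rb) (k # xs) (rec_nat (eval ei xs) (\<lambda>k v. eval eb (v # k # xs)) k)"
proof (induction k)
  case 0 then show ?case using assms by (auto intro: recf_eval.prim0)
next
  case (Suc k) then show ?case using assms by (auto intro: recf_eval.primS)
qed

lemma compile: "wfe n e \<Longrightarrow> \<exists>r. comp_by n r e"
proof (induction e arbitrary: n)
  case Z then show ?case by (auto simp: comp_by_def intro: recf_eval.zero)
next
  case (S e)
  then obtain r where r: "comp_by n r e" by auto
  have "comp_by n (Comp Succ [r]) (S e)"
    unfolding comp_by_def
  proof (intro allI impI)
    fix xs :: "nat list" assume "length xs = n"
    then show "recf_eval (Comp Succ [r]) xs (eval (S e) xs)"
      using r by (auto simp: comp_by_def intro!: recf_eval.comp[where ys="[eval e xs]"] recf_eval.succ)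
  qed
  then show ?case by blast
next
  case (Var i)
  then have "comp_by n (Proj i) (Var i)" by (auto simp: comp_by_def intro: recf_eval.proj)
  then show ?case by blast
next
  case (App g es)
  then obtain rg where rg: "comp_by (length es) rg g" by (meson wfe.simps(4))
  from App have "\<forall>e\<in>set es. \<exists>r. comp_by n r e" by auto
  from list_choice[OF this] obtain rs where rs: "length rs = length es"
    "\<forall>i<length es. comp_by n (rs ! i) (es ! i)" by auto
  have "comp_by n (Comp rg rs) (App g es)"
    unfolding comp_by_def
  proof (intro allI impI)
    fix xs :: "nat list" assume "length xs = n"
    then show "recf_eval (Comp rg rs) xs (eval (App g es) xs)"
      using rs rg by (auto simp: comp_by_def intro!: recf_eval.comp[where ys="map (\<lambda>e. eval e xs) es"])
  qed
  then show ?case by blast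
next
  case (Iter en ei eb)
  then obtain rn ri rb where r: "comp_by n rn en" "comp_by n ri ei" "comp_by (Suc (Suc n)) rb eb"
    by (metis wfe.simps(5))
  have "comp_by n (Comp (PrimRec ri rb) (rn # map Proj [0..<n])) (Iter en ei eb)"
    unfolding comp_by_def
  proof (intro allI impI)
    fix xs :: "nat list" assume len: "length xs = n"
    have pr: "recf_eval (PrimRec ri rb) (eval en xs # xs) (eval (Iter en ei eb) xs)"
      using primrec_eval[of n ri ei rb eb xs "eval en xs"] r len by (simp add: comp_by_def)
    show "recf_eval (Comp (PrimRec ri rb) (rn # map Proj [0..<n])) xs (eval (Iter en ei eb) xs)"
      apply (rule recf_eval.comp[where ys="eval en xs # xs"])
      using len r pr by (auto simp: comp_by_def nth_Cons intro: recf_eval.proj split: nat.split)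
  qed
  then show ?case by blast
next
  case (Min eb)
  then obtain rb where rb: "comp_by (Suc n) rb eb" by auto
  have "comp_by n (Mu rb) (Min eb)"
    unfolding comp_by_def
  proof (intro allI impI)
    fix xs :: "nat list" assume len: "length xs = n"
    with Min obtain m where m: "eval eb (m # xs) = 0" by auto
    let ?l = "LEAST m. eval eb (m # xs) = 0"
    have l0: "eval eb (?l # xs) = 0" using m by (rule LeastI)
    have lt: "\<forall>k<?l. eval eb (k # xs) \<noteq> 0" using not_less_Least by blast
    show "recf_eval (Mu rb) xs (eval (Min eb) xs)"
      apply simp
      apply (rule recf_eval.mu)
      using rb len l0 apply (metis comp_by_def length_Cons)
      using rb len lt by (metis comp_by_def length_Cons not0_implies_Suc)
  qed
  then show ?case by blast
qed


definition e_add :: ex where "e_add = Iter (Var 1) (Var 0) (S (Var 0))"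
lemma wf_add[simp]: "wfe (Suc (Suc 0)) e_add" by (simp add: e_add_def)
lemma ev_add[simp]: "eval e_add [a, b] = a + b"
  by (simp add: e_add_def, induction b) auto

definition e_pred :: ex where "e_pred = Iter (Var 0) Z (Var 1)"
lemma wf_pred[simp]: "wfe (Suc 0) e_pred" by (simp add: e_pred_def)
lemma ev_pred[simp]: "eval e_pred [a] = a - 1"
  by (simp add: e_pred_def, cases a) auto

definition e_sub :: ex where "e_sub = Iter (Var 1) (Var 0) (App e_pred [Var 0])"
lemma wf_sub[simp]: "wfe (Suc (Suc 0)) e_sub" by (simp add: e_sub_def)
lemma ev_sub[simp]: "eval e_sub [a, b] = a - b"
  by (simp add: e_sub_def, induction b) auto

definition e_ifz :: ex where "e_ifz = Iter (Var 0) (Var 1) (Var 4)"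
lemma wf_ifz[simp]: "wfe (Suc (Suc (Suc 0))) e_ifz" by (simp add: e_ifz_def)
lemma ev_ifz[simp]: "eval e_ifz [a, b, c] = (if a = 0 then b else c)"
  by (simp add: e_ifz_def, cases a) auto

definition e_tri :: ex where "e_tri = Iter (Var 0) Z (App e_add [Var 0, S (Var 1)])"
lemma wf_tri[simp]: "wfe (Suc 0) e_tri" by (simp add: e_tri_def)
lemma ev_tri[simp]: "eval e_tri [a] = triangle a"
  by (simp add: e_tri_def, induction a) auto

lemma triangle_mono: "m \<le> n \<Longrightarrow> triangle m \<le> triangle n"
  by (induction n) (auto simp: le_Suc_eq)

lemma triangle_ge: "n \<le> triangle n"
  by (induction n) auto

definition e_dg :: ex where "e_dg = Min (App e_sub [S (Var 1), App e_tri [S (Var 0)]])"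
lemma wf_dg[simp]: "wfe (Suc 0) e_dg"
proof -
  have "\<exists>m. z \<le> triangle m + m" for z using triangle_ge[of z] by (intro exI[of _ z]) simp
  then show ?thesis by (auto simp: e_dg_def)
qed

lemma dg_char: "(LEAST d. z \<le> triangle d + d) = fst (prod_decode z) + snd (prod_decode z)"
proof -
  obtain a b where ab: "prod_decode z = (a, b)" by fastforce
  have z: "z = triangle (a + b) + a" using prod_decode_inverse[of z] ab by (simp add: prod_encode_def)
  have "(LEAST d. z \<le> triangle d + d) = a + b"
  proof (rule Least_equality)
    show "z \<le> triangle (a + b) + (a + b)" using z by simp
  next
    fix d assume "z \<le> triangle d + d"
    then have "z < triangle (Suc d)" by simp
    show "a + b \<le> d"
    proof (rule ccontr)
      assume "\<not> a + b \<le> d"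
      then have "triangle (Suc d) \<le> triangle (a + b)" by (intro triangle_mono) simp
      with \<open>z < triangle (Suc d)\<close> z show False by simp
    qed
  qed
  then show ?thesis using ab by simp
qed

lemma ev_dg[simp]: "eval e_dg [z] = fst (prod_decode z) + snd (prod_decode z)"
  by (simp add: e_dg_def dg_char)

definition e_fst :: ex where "e_fst = App e_sub [Var 0, App e_tri [App e_dg [Var 0]]]"
lemma wf_fst[simp]: "wfe (Suc 0) e_fst" by (simp add: e_fst_def)
lemma ev_fst[simp]: "eval e_fst [z] = fst (prod_decode z)"
proof -
  obtain a b where ab: "prod_decode z = (a, b)" by fastforce
  have z: "z = triangle (a + b) + a" using prod_decode_inverse[of z] ab by (simp add: prod_encode_def)
  show ?thesis by (simp add: e_fst_def ab) (simp add: z)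
qed

definition e_snd :: ex where "e_snd = App e_sub [App e_dg [Var 0], App e_fst [Var 0]]"
lemma wf_snd[simp]: "wfe (Suc 0) e_snd" by (simp add: e_snd_def)
lemma ev_snd[simp]: "eval e_snd [z] = snd (prod_decode z)"
  by (simp add: e_snd_def)

definition e_pair :: ex where "e_pair = App e_add [App e_tri [App e_add [Var 0, Var 1]], Var 0]"
lemma wf_pair[simp]: "wfe (Suc (Suc 0)) e_pair" by (simp add: e_pair_def)
lemma ev_pair[simp]: "eval e_pair [a, b] = prod_encode (a, b)"
  by (simp add: e_pair_def prod_encode_def)

definition e_eq :: ex where "e_eq = App e_add [App e_sub [Var 0, Var 1], App e_sub [Var 1, Var 0]]"
lemma wf_eq[simp]: "wfe (Suc (Suc 0)) e_eq" by (simp add: e_eq_def)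
lemma ev_eq[simp]: "(eval e_eq [a, b] = 0) = (a = b)"
  by (simp add: e_eq_def) arith

definition e_cons :: ex where "e_cons = S (App e_pair [Var 0, Var 1])"
lemma wf_cons[simp]: "wfe (Suc (Suc 0)) e_cons" by (simp add: e_cons_def)
lemma ev_cons[simp]: "eval e_cons [a, list_encode l] = list_encode (a # l)"
  by (simp add: e_cons_def)

definition e_hd :: ex where "e_hd = App e_fst [App e_pred [Var 0]]"
lemma wf_hd[simp]: "wfe (Suc 0) e_hd" by (simp add: e_hd_def)
lemma ev_hd[simp]: "eval e_hd [list_encode (a # l)] = a"
  by (simp add: e_hd_def)

definition e_tl :: ex where "e_tl = App e_snd [App e_pred [Var 0]]"
lemma wf_tl[simp]: "wfe (Suc 0) e_tl" by (simp add: e_tl_def)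
lemma ev_tl[simp]: "eval e_tl [list_encode (a # l)] = list_encode l"
  by (simp add: e_tl_def)


lemma ev_hd_gen: "eval e_hd [z] = fst (prod_decode (z - 1))" by (simp add: e_hd_def)
lemma ev_tl_gen: "eval e_tl [z] = snd (prod_decode (z - 1))" by (simp add: e_tl_def)

lemma prod_encode_ge2: "b \<le> prod_encode (a, b)"
  using triangle_ge[of "a + b"] by (simp add: prod_encode_def)
lemma prod_encode_ge1: "a \<le> prod_encode (a, b)"
  using triangle_ge[of "a + b"] by (simp add: prod_encode_def)

lemma list_encode_ge_length: "length xs \<le> list_encode xs"
  by (induction xs) (auto intro: order.trans[OF _ prod_encode_ge2])

lemma list_encode_ge_elem: "x \<in> set xs \<Longrightarrow> x < list_encode xs"
proof (induction xs)
  case Nil then show ?case by simp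
next
  case (Cons y ys)
  have "y < list_encode (y # ys)" using prod_encode_ge1[of y "list_encode ys"] by simp
  moreover have "list_encode ys < list_encode (y # ys)" using prod_encode_ge2[of "list_encode ys" y] by simp
  ultimately show ?case using Cons by auto
qed

definition e_fold :: "ex \<Rightarrow> ex" where
  "e_fold g = App e_snd [Iter (Var 0) (App e_pair [Var 0, Var 1])
     (App e_ifz [App e_fst [Var 0], Var 0,
        App e_pair [App e_tl [App e_fst [Var 0]], App g [App e_hd [App e_fst [Var 0]], App e_snd [Var 0], Var 4]]])]"

lemma wf_fold[simp]: "wfe (Suc (Suc (Suc 0))) g \<Longrightarrow> wfe (Suc (Suc (Suc 0))) (e_fold g)"
  by (simp add: e_fold_def)

lemma ev_fold[simp]: "eval (e_fold g) [list_encode xs, a, p] = foldl (\<lambda>acc x. eval g [x, acc, p]) a xs"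
proof -
  let ?f = "\<lambda>acc x. eval g [x, acc, p]"
  let ?st = "rec_nat (prod_encode (list_encode xs, a))
     (\<lambda>k v. eval (App e_ifz [App e_fst [Var 0], Var 0,
        App e_pair [App e_tl [App e_fst [Var 0]], App g [App e_hd [App e_fst [Var 0]], App e_snd [Var 0], Var 4]]])
       [v, k, list_encode xs, a, p])"
  have st: "?st k = prod_encode (list_encode (drop k xs), foldl ?f a (take k xs))" for k
  proof (induction k)
    case 0 then show ?case by simp
  next
    case (Suc k)
    show ?case
    proof (cases "k < length xs")
      case True
      then have d: "drop k xs = xs ! k # drop (Suc k) xs" by (simp add: Cons_nth_drop_Suc)
      have t: "take (Suc k) xs = take k xs @ [xs ! k]" using True by (simp add: take_Suc_conv_app_nth)
      have "list_encode (drop k xs) \<noteq> 0" using d by simp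
      then show ?thesis using Suc d t by (simp add: d ev_hd_gen ev_tl_gen)
    next
      case False
      then show ?thesis using Suc by simp
    qed
  qed
  have "?st (list_encode xs) = prod_encode (0, foldl ?f a xs)"
    using st[of "list_encode xs"] list_encode_ge_length[of xs] by simp
  then show ?thesis by (simp add: e_fold_def)
qed

definition e_range :: "ex \<Rightarrow> ex" where
  "e_range g = Iter (Var 0) (Var 1) (App g [Var 1, Var 0, Var 4])"
lemma wf_range[simp]: "wfe (Suc (Suc (Suc 0))) g \<Longrightarrow> wfe (Suc (Suc (Suc 0))) (e_range g)"
  by (simp add: e_range_def)
lemma ev_range[simp]: "eval (e_range g) [n, a, p] = foldl (\<lambda>acc i. eval g [i, acc, p]) a [0..<n]"
  by (simp add: e_range_def, induction n) auto

definition e_iter :: "ex \<Rightarrow> ex" where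
  "e_iter g = Iter (Var 0) (Var 1) (App g [Var 0, Var 4])"
lemma wf_iter[simp]: "wfe (Suc (Suc 0)) g \<Longrightarrow> wfe (Suc (Suc (Suc 0))) (e_iter g)"
  by (simp add: e_iter_def)
lemma ev_iter[simp]: "eval (e_iter g) [n, a, p] = ((\<lambda>v. eval g [v, p]) ^^ n) a"
  by (simp add: e_iter_def, induction n) auto

definition alookup :: "(nat \<times> nat) list \<Rightarrow> nat \<Rightarrow> nat" where
  "alookup tbl k = foldl (\<lambda>acc x. if fst x = k then snd x else acc) 0 tbl"

definition e_lookup :: ex where
  "e_lookup = App (e_fold (App e_ifz [App e_eq [App e_fst [Var 0], Var 2], App e_snd [Var 0], Var 1])) [Var 0, Z, Var 1]"
lemma wf_lookup[simp]: "wfe (Suc (Suc 0)) e_lookup" by (simp add: e_lookup_def)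
lemma ev_lookup[simp]: "eval e_lookup [list_encode (map prod_encode tbl), k] = alookup tbl k"
proof -
  have "foldl (\<lambda>acc x. if fst (prod_decode x) = k then snd (prod_decode x) else acc) b (map prod_encode tbl)
    = foldl (\<lambda>acc x. if fst x = k then snd x else acc) b tbl" for b
    by (induction tbl arbitrary: b) auto
  then show ?thesis by (simp add: e_lookup_def alookup_def) 
qed

lemma alookup_eq: "\<forall>x\<in>set tbl. fst x = k \<longrightarrow> snd x = w \<Longrightarrow> k \<in> fst ` set tbl \<Longrightarrow> alookup tbl k = w"
proof -
  have "\<forall>x\<in>set tbl. fst x = k \<longrightarrow> snd x = w \<Longrightarrow> (k \<in> fst ` set tbl \<or> b = w) \<Longrightarrow> foldl (\<lambda>acc x. if fst x = k then snd x else acc) b tbl = w" for b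
    by (induction tbl arbitrary: b) auto
  then show "\<forall>x\<in>set tbl. fst x = k \<longrightarrow> snd x = w \<Longrightarrow> k \<in> fst ` set tbl \<Longrightarrow> alookup tbl k = w"
    unfolding alookup_def by blast
qed


lemma list_encode_Nil: "list_encode [] = 0" by simp
declare list_encode.simps[simp del]
declare list_encode_Nil[simp]

fun e_num :: "nat \<Rightarrow> ex" where
  "e_num 0 = Z" | "e_num (Suc k) = S (e_num k)"
lemma wf_num[simp]: "wfe n (e_num k)" by (induction k) auto
lemma ev_num[simp]: "eval (e_num k) xs = k" by (induction k) auto

lemma foldl_cons_enc: "foldl (\<lambda>acc x. eval e_cons [f x, acc]) (list_encode ys) xs = list_encode (rev (map f xs) @ ys)"
  by (induction xs arbitrary: ys) auto

definition e_mapr :: "ex \<Rightarrow> ex" where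
  "e_mapr g = App (e_fold (App e_cons [App g [Var 0, Var 2], Var 1])) [Var 0, Z, Var 1]"
lemma wf_mapr[simp]: "wfe (Suc (Suc 0)) g \<Longrightarrow> wfe (Suc (Suc 0)) (e_mapr g)"
  by (simp add: e_mapr_def)
lemma ev_mapr[simp]: "eval (e_mapr g) [list_encode xs, p] = list_encode (rev (map (\<lambda>x. eval g [x, p]) xs))"
  using foldl_cons_enc[of "\<lambda>x. eval g [x, p]" "[]" xs] by (simp add: e_mapr_def)

definition e_rev :: ex where "e_rev = App (e_mapr (Var 0)) [Var 0, Z]"
lemma wf_rev[simp]: "wfe (Suc 0) e_rev" by (simp add: e_rev_def)
lemma ev_rev[simp]: "eval e_rev [list_encode xs] = list_encode (rev xs)"
  by (simp add: e_rev_def)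

definition e_map :: "ex \<Rightarrow> ex" where "e_map g = App e_rev [App (e_mapr g) [Var 0, Var 1]]"
lemma wf_map[simp]: "wfe (Suc (Suc 0)) g \<Longrightarrow> wfe (Suc (Suc 0)) (e_map g)"
  by (simp add: e_map_def)
lemma ev_map[simp]: "eval (e_map g) [list_encode xs, p] = list_encode (map (\<lambda>x. eval g [x, p]) xs)"
  by (simp add: e_map_def rev_map)


lemma fold_mirror:
  assumes "\<And>x acc. x \<in> set xs \<Longrightarrow> eval g [enc x, encA acc, p] = encA (f acc x)"
  shows "eval (e_fold g) [list_encode (map enc xs), encA a, p] = encA (foldl f a xs)"
proof -
  have "foldl (\<lambda>acc y. eval g [y, acc, p]) (encA a) (map enc xs) = encA (foldl f a xs)"
    using assms by (induction xs arbitrary: a) auto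
  then show ?thesis by simp
qed

definition encl :: "(nat \<times> nat) list \<Rightarrow> nat" where "encl l = list_encode (map prod_encode l)"
definition encL :: "(nat \<times> nat) list list \<Rightarrow> nat" where "encL L = list_encode (map encl L)"

definition ext :: "nat \<Rightarrow> nat \<Rightarrow> (nat \<times> nat) list list \<Rightarrow> (nat \<times> nat) list list \<Rightarrow> (nat \<times> nat) list list" where
  "ext k c acc L = foldl (\<lambda>acc l. ((k, c) # l) # acc) acc L"
definition stp :: "nat list \<Rightarrow> nat \<Rightarrow> (nat \<times> nat) list list \<Rightarrow> (nat \<times> nat) list list" where
  "stp Fl k L = foldl (\<lambda>acc c. ext k c acc L) [] Fl"
definition allth :: "nat list \<Rightarrow> nat \<Rightarrow> (nat \<times> nat) list list" where
  "allth Fl n = foldl (\<lambda>L k. stp Fl k L) [[]] [0..<n]"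

definition g_ext :: ex where "g_ext = App e_cons [App e_cons [Var 2, Var 0], Var 1]"
lemma wf_g_ext[simp]: "wfe (Suc (Suc (Suc 0))) g_ext" by (simp add: g_ext_def)
lemma ev_ext: "eval (e_fold g_ext) [encL L, encL acc, prod_encode (k, c)] = encL (ext k c acc L)"
  unfolding encL_def ext_def
  by (rule fold_mirror) (simp add: g_ext_def encl_def)

definition g_stp :: ex where
  "g_stp = App (e_fold g_ext) [App e_snd [Var 2], Var 1, App e_pair [App e_fst [Var 2], Var 0]]"
lemma wf_g_stp[simp]: "wfe (Suc (Suc (Suc 0))) g_stp" by (simp add: g_stp_def)
lemma encL_Nil: "encL [] = 0" by (simp add: encL_def)
lemma ev_stp: "eval (e_fold g_stp) [list_encode Fl, 0, prod_encode (k, encL L)] = encL (stp Fl k L)"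
proof -
  have "eval (e_fold g_stp) [list_encode (map id Fl), encL [], prod_encode (k, encL L)] = encL (stp Fl k L)"
    unfolding stp_def
    by (rule fold_mirror) (simp add: g_stp_def ev_ext)
  then show ?thesis by (simp add: encL_Nil)
qed

definition g_allth :: "nat list \<Rightarrow> ex" where
  "g_allth Fl = App (e_fold g_stp) [e_num (list_encode Fl), Z, App e_pair [Var 0, Var 1]]"
lemma wf_g_allth[simp]: "wfe (Suc (Suc (Suc 0))) (g_allth Fl)" by (simp add: g_allth_def)

definition e_allth :: "nat list \<Rightarrow> ex" where
  "e_allth Fl = App (e_range (g_allth Fl)) [Var 0, e_num (encL [[]]), Z]"
lemma wf_allth[simp]: "wfe (Suc 0) (e_allth Fl)" by (simp add: e_allth_def)
lemma ev_allth[simp]: "eval (e_allth Fl) [n] = encL (allth Fl n)"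
proof -
  have "foldl (\<lambda>acc i. eval (g_allth Fl) [i, acc, 0]) (encL L) xs = encL (foldl (\<lambda>L k. stp Fl k L) L xs)" for L xs
  proof (induction xs arbitrary: L)
    case Nil then show ?case by simp
  next
    case (Cons x xs)
    have "eval (g_allth Fl) [x, encL L, 0] = encL (stp Fl x L)"
      using ev_stp[of Fl x L] by (simp add: g_allth_def)
    then show ?case using Cons by simp
  qed
  then show ?thesis by (simp add: e_allth_def allth_def)
qed


lemma ev_cons0[simp]: "eval e_cons [a, 0] = list_encode [a]"
  using ev_cons[of a "[]"] by simp

lemma enc_rule_simp[simp]: "enc_rule (h, c, b) = prod_encode (enc_ratom h, prod_encode (enc_fm c, list_encode (map enc_lit b)))"
  by (simp add: enc_rule_def)

definition sig :: "(nat \<times> nat) list \<Rightarrow> nat \<Rightarrow> trm" where "sig l x = C (alookup l x)"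

definition wrap :: "(nat \<times> nat) list \<Rightarrow> fm \<Rightarrow> fm" where
  "wrap l c = foldl (\<lambda>acc x. Ex (fst x) (Conj (Eq (V (fst x)) (C (snd x))) acc)) c l"

definition ground :: "hrule \<Rightarrow> (nat \<times> nat) list \<Rightarrow> hrule" where
  "ground r l = (case r of (h, c, b) \<Rightarrow> (ratom_subst (sig l) h, wrap l c, map (lit_subst (sig l)) b))"

definition grules :: "nat list \<Rightarrow> hprog \<Rightarrow> hprog" where
  "grules Fl P = foldl (\<lambda>acc r. foldl (\<lambda>acc l. ground r l # acc) acc (allth Fl (Suc (enc_rule r)))) [] P"

definition ratoms :: "ratom \<Rightarrow> hprog \<Rightarrow> ratom list" where
  "ratoms A G = foldl (\<lambda>acc r. foldl (\<lambda>acc l. lit_atom l # acc) (fst r # acc) (snd (snd r))) [A] G"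

definition e_tsub :: ex where
  "e_tsub = App e_ifz [App e_fst [Var 0], App e_pair [e_num 1, App e_lookup [Var 1, App e_snd [Var 0]]], Var 0]"
lemma wf_tsub[simp]: "wfe (Suc (Suc 0)) e_tsub" by (simp add: e_tsub_def)
lemma ev_tsub[simp]: "eval e_tsub [enc_trm t, encl l] = enc_trm (trm_subst (sig l) t)"
  by (cases t) (simp_all add: e_tsub_def encl_def sig_def)

definition e_rsub :: ex where
  "e_rsub = App e_pair [App e_fst [Var 0], App (e_map e_tsub) [App e_snd [Var 0], Var 1]]"
lemma wf_rsub[simp]: "wfe (Suc (Suc 0)) e_rsub" by (simp add: e_rsub_def)
lemma ev_rsub[simp]: "eval e_rsub [enc_ratom a, encl l] = enc_ratom (ratom_subst (sig l) a)"
  by (cases a) (simp add: e_rsub_def comp_def)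

definition e_lsub :: ex where
  "e_lsub = App e_pair [App e_fst [Var 0], App e_rsub [App e_snd [Var 0], Var 1]]"
lemma wf_lsub[simp]: "wfe (Suc (Suc 0)) e_lsub" by (simp add: e_lsub_def)
lemma ev_lsub[simp]: "eval e_lsub [enc_lit x, encl l] = enc_lit (lit_subst (sig l) x)"
  by (cases x) (simp_all add: e_lsub_def)

definition g_wrap :: ex where
  "g_wrap = App e_pair [e_num 6, App e_pair [App e_fst [Var 0], App e_pair [e_num 4,
     App e_pair [App e_pair [e_num 1, App e_pair [App e_pair [e_num 0, App e_fst [Var 0]],
       App e_pair [e_num 1, App e_snd [Var 0]]]], Var 1]]]]"
lemma wf_g_wrap[simp]: "wfe (Suc (Suc (Suc 0))) g_wrap" by (simp add: g_wrap_def)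
definition e_wrap :: ex where "e_wrap = App (e_fold g_wrap) [Var 0, Var 1, Z]"
lemma wf_wrap[simp]: "wfe (Suc (Suc 0)) e_wrap" by (simp add: e_wrap_def)
lemma ev_wrap[simp]: "eval e_wrap [encl l, enc_fm c] = enc_fm (wrap l c)"
proof -
  have "eval (e_fold g_wrap) [list_encode (map prod_encode l), enc_fm c, 0] = enc_fm (wrap l c)"
    unfolding wrap_def by (rule fold_mirror) (auto simp: g_wrap_def)
  then show ?thesis by (simp add: e_wrap_def encl_def)
qed

definition e_ground :: ex where
  "e_ground = App e_pair [App e_rsub [App e_fst [Var 0], Var 1],
     App e_pair [App e_wrap [Var 1, App e_fst [App e_snd [Var 0]]],
                 App (e_map e_lsub) [App e_snd [App e_snd [Var 0]], Var 1]]]"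
lemma wf_ground[simp]: "wfe (Suc (Suc 0)) e_ground" by (simp add: e_ground_def)
lemma ev_ground[simp]: "eval e_ground [enc_rule r, encl l] = enc_rule (ground r l)"
  by (cases r) (simp add: e_ground_def ground_def comp_def)

definition g_gr2 :: ex where "g_gr2 = App e_cons [App e_ground [Var 2, Var 0], Var 1]"
lemma wf_g_gr2[simp]: "wfe (Suc (Suc (Suc 0))) g_gr2" by (simp add: g_gr2_def)
definition g_gr1 :: "nat list \<Rightarrow> ex" where
  "g_gr1 Fl = App (e_fold g_gr2) [App (e_allth Fl) [S (Var 0)], Var 1, Var 0]"
lemma wf_g_gr1[simp]: "wfe (Suc (Suc (Suc 0))) (g_gr1 Fl)" by (simp add: g_gr1_def)
definition e_grules :: "nat list \<Rightarrow> ex" where "e_grules Fl = App (e_fold (g_gr1 Fl)) [Var 0, Z, Z]"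
lemma wf_grules[simp]: "wfe (Suc 0) (e_grules Fl)" by (simp add: e_grules_def)

lemma ev_grules[simp]: "eval (e_grules Fl) [list_encode (map enc_rule P)] = list_encode (map enc_rule (grules Fl P))"
proof -
  have inner: "eval (e_fold g_gr2) [list_encode (map encl L), list_encode (map enc_rule acc), enc_rule r]
     = list_encode (map enc_rule (foldl (\<lambda>acc l. ground r l # acc) acc L))" for L acc r
    by (rule fold_mirror) (simp add: g_gr2_def)
  have "eval (e_fold (g_gr1 Fl)) [list_encode (map enc_rule P), list_encode (map enc_rule []), 0]
     = list_encode (map enc_rule (grules Fl P))"
    unfolding grules_def
  proof (rule fold_mirror)
    fix x acc assume "x \<in> set P"
    show "eval (g_gr1 Fl) [enc_rule x, list_encode (map enc_rule acc), 0] =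
      list_encode (map enc_rule (foldl (\<lambda>acc l. ground x l # acc) acc (allth Fl (Suc (enc_rule x)))))"
      using inner[of "allth Fl (Suc (enc_rule x))" acc x] by (simp add: g_gr1_def encL_def)
  qed
  then show ?thesis by (simp add: e_grules_def)
qed

definition g_ra4 :: ex where "g_ra4 = App e_cons [App e_snd [Var 0], Var 1]"
lemma wf_g_ra4[simp]: "wfe (Suc (Suc (Suc 0))) g_ra4" by (simp add: g_ra4_def)
definition g_ra3 :: ex where
  "g_ra3 = App (e_fold g_ra4) [App e_snd [App e_snd [Var 0]], App e_cons [App e_fst [Var 0], Var 1], Z]"
lemma wf_g_ra3[simp]: "wfe (Suc (Suc (Suc 0))) g_ra3" by (simp add: g_ra3_def)
definition e_ratoms :: ex where "e_ratoms = App (e_fold g_ra3) [Var 1, App e_cons [Var 0, Z], Z]"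
lemma wf_ratoms[simp]: "wfe (Suc (Suc 0)) e_ratoms" by (simp add: e_ratoms_def)

lemma ev_ratoms[simp]: "eval e_ratoms [enc_ratom A, list_encode (map enc_rule G)] = list_encode (map enc_ratom (ratoms A G))"
proof -
  have inner: "eval (e_fold g_ra4) [list_encode (map enc_lit b), list_encode (map enc_ratom acc), 0]
     = list_encode (map enc_ratom (foldl (\<lambda>acc l. lit_atom l # acc) acc b))" for b acc
    by (rule fold_mirror) (case_tac x, simp_all add: g_ra4_def)
  have "eval (e_fold g_ra3) [list_encode (map enc_rule G), list_encode (map enc_ratom [A]), 0]
     = list_encode (map enc_ratom (ratoms A G))"
    unfolding ratoms_def
  proof (rule fold_mirror)
    fix x acc assume "x \<in> set G"
    obtain h c b where x: "x = (h, c, b)" by (cases x) auto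
    have "eval g_ra3 [enc_rule x, list_encode (map enc_ratom acc), 0] =
      eval (e_fold g_ra4) [list_encode (map enc_lit b), list_encode (map enc_ratom (h # acc)), 0]"
      by (simp add: g_ra3_def x del: ev_fold)
    then show "eval g_ra3 [enc_rule x, list_encode (map enc_ratom acc), 0] =
      list_encode (map enc_ratom (foldl (\<lambda>acc l. lit_atom l # acc) (fst x # acc) (snd (snd x))))"
      using inner[of b "h # acc"] by (simp add: x)
  qed
  then show ?thesis by (simp add: e_ratoms_def)
qed


declare list_encode_eq[simp]

lemma inj_enc_trm: "inj enc_trm"
proof (rule injI)
  fix s t assume "enc_trm s = enc_trm t" then show "s = t" by (cases s; cases t) auto
qed

lemma enc_ratom_eq[simp]: "enc_ratom a = enc_ratom b \<longleftrightarrow> a = b"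
  using inj_enc_trm by (cases a; cases b) auto

lemma inj_enc_ratom: "inj enc_ratom" by (rule injI) simp

lemma enc_lit_eq[simp]: "enc_lit a = enc_lit b \<longleftrightarrow> a = b"
  by (cases a; cases b) auto

lemma inj_enc_lit: "inj enc_lit" by (rule injI) simp

lemma enc_fm_eq[simp]: "enc_fm f = enc_fm g \<longleftrightarrow> f = g"
proof (induction f arbitrary: g)
  case Tru then show ?case by (cases g) auto
next
  case (Eq s t) then show ?case using inj_enc_trm by (cases g) (auto dest: injD)
next
  case (Atm p ts) then show ?case using inj_enc_trm by (cases g) auto
next
  case (Neg f) then show ?case by (cases g) auto
next
  case (Conj f1 f2) then show ?case by (cases g) auto
next
  case (Disj f1 f2) then show ?case by (cases g) auto
next
  case (Ex x f) then show ?case by (cases g) auto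
qed

lemma inj_enc_rule: "inj enc_rule"
proof (rule injI)
  fix r s assume "enc_rule r = enc_rule s" then show "r = s"
    using inj_enc_lit by (cases r; cases s) auto
qed

lemma enc_input_eq: "enc_input P A = enc_input P' A' \<longleftrightarrow> P = P' \<and> A = A'"
  using inj_enc_rule by (auto simp: enc_input_def)

definition tab :: "(ratom \<Rightarrow> fm) \<Rightarrow> ratom list \<Rightarrow> nat" where
  "tab f Rl = list_encode (map prod_encode (map (\<lambda>a. (enc_ratom a, enc_fm (f a))) Rl))"

lemma ev_lookup_tab[simp]: "a \<in> set Rl \<Longrightarrow> eval e_lookup [tab f Rl, enc_ratom a] = enc_fm (f a)"
  unfolding tab_def ev_lookup by (rule alookup_eq) (auto simp: image_image)

definition e_mkTab :: "ex \<Rightarrow> ex" where "e_mkTab g = e_mapr (App e_pair [Var 0, App g [Var 0, Var 1]])"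
lemma wf_mkTab[simp]: "wfe (Suc (Suc 0)) g \<Longrightarrow> wfe (Suc (Suc 0)) (e_mkTab g)" by (simp add: e_mkTab_def)
lemma ev_mkTab: "(\<And>a. a \<in> set Rl \<Longrightarrow> eval g [enc_ratom a, p] = enc_fm (f a)) \<Longrightarrow>
   eval (e_mkTab g) [list_encode (map enc_ratom Rl), p] = tab f (rev Rl)"
  by (simp add: e_mkTab_def tab_def rev_map)

definition bodyf :: "(lit \<Rightarrow> fm) \<Rightarrow> lit list \<Rightarrow> fm" where
  "bodyf val b = foldl (\<lambda>acc l. Conj (val l) acc) Tru b"
definition litv :: "(ratom \<Rightarrow> fm) \<Rightarrow> (ratom \<Rightarrow> fm) \<Rightarrow> lit \<Rightarrow> fm" where
  "litv d nv l = (case l of Pos x \<Rightarrow> d x | NegL x \<Rightarrow> nv x)"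

definition g_body :: ex where
  "g_body = App e_pair [e_num 4, App e_pair [App e_ifz [App e_fst [Var 0],
      App e_lookup [App e_fst [Var 2], App e_snd [Var 0]],
      App e_lookup [App e_snd [Var 2], App e_snd [Var 0]]], Var 1]]"
lemma wf_g_body[simp]: "wfe (Suc (Suc (Suc 0))) g_body" by (simp add: g_body_def)
definition e_body :: ex where "e_body = App (e_fold g_body) [Var 0, e_num (enc_fm Tru), Var 1]"
lemma wf_body[simp]: "wfe (Suc (Suc 0)) e_body" by (simp add: e_body_def)
lemma ev_body[simp]: "(\<And>l. l \<in> set b \<Longrightarrow> lit_atom l \<in> set Rl) \<Longrightarrow>
  eval e_body [list_encode (map enc_lit b), prod_encode (tab d Rl, tab nv Rl)] = enc_fm (bodyf (litv d nv) b)"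
proof -
  assume as: "\<And>l. l \<in> set b \<Longrightarrow> lit_atom l \<in> set Rl"
  have "eval (e_fold g_body) [list_encode (map enc_lit b), enc_fm Tru, prod_encode (tab d Rl, tab nv Rl)] = enc_fm (bodyf (litv d nv) b)"
    unfolding bodyf_def
  proof (rule fold_mirror)
    fix x acc assume "x \<in> set b"
    with as have "lit_atom x \<in> set Rl" by auto
    then show "eval g_body [enc_lit x, enc_fm acc, prod_encode (tab d Rl, tab nv Rl)] = enc_fm (Conj (litv d nv x) acc)"
      by (cases x) (simp_all add: g_body_def litv_def)
  qed
  then show ?thesis by (simp add: e_body_def del: ev_fold)
qed

definition dstep :: "hprog \<Rightarrow> (ratom \<Rightarrow> fm) \<Rightarrow> (ratom \<Rightarrow> fm) \<Rightarrow> ratom \<Rightarrow> fm" where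
  "dstep G nv d a = foldl (\<lambda>acc r. if fst r = a then Disj (Conj (fst (snd r)) (bodyf (litv d nv) (snd (snd r)))) acc else acc) (Neg Tru) G"

definition g_ds :: ex where
  "g_ds = App e_ifz [App e_eq [App e_fst [Var 0], App e_fst [Var 2]],
     App e_pair [e_num 5, App e_pair [App e_pair [e_num 4, App e_pair [App e_fst [App e_snd [Var 0]],
        App e_body [App e_snd [App e_snd [Var 0]], App e_snd [Var 2]]]], Var 1]], Var 1]"
lemma wf_g_ds[simp]: "wfe (Suc (Suc (Suc 0))) g_ds" by (simp add: g_ds_def)
definition e_dstep :: ex where
  "e_dstep = App (e_fold g_ds) [App e_fst [Var 1], e_num (enc_fm (Neg Tru)), App e_pair [Var 0, App e_snd [Var 1]]]"
lemma wf_dstep[simp]: "wfe (Suc (Suc 0)) e_dstep" by (simp add: e_dstep_def)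

definition bodyok :: "hprog \<Rightarrow> ratom list \<Rightarrow> bool" where
  "bodyok G Rl \<longleftrightarrow> (\<forall>r\<in>set G. \<forall>l\<in>set (snd (snd r)). lit_atom l \<in> set Rl)"

lemma ev_dstep[simp]: "bodyok G Rl \<Longrightarrow>
  eval e_dstep [enc_ratom a, prod_encode (list_encode (map enc_rule G), prod_encode (tab d Rl, tab nv Rl))]
  = enc_fm (dstep G nv d a)"
proof -
  assume ok: "bodyok G Rl"
  have "eval (e_fold g_ds) [list_encode (map enc_rule G), enc_fm (Neg Tru), prod_encode (enc_ratom a, prod_encode (tab d Rl, tab nv Rl))]
     = enc_fm (dstep G nv d a)"
    unfolding dstep_def
  proof (rule fold_mirror)
    fix x acc assume x: "x \<in> set G"
    obtain h c b where xe: "x = (h, c, b)" by (cases x) auto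
    from ok x xe have "\<And>l. l \<in> set b \<Longrightarrow> lit_atom l \<in> set Rl" by (auto simp: bodyok_def)
    then show "eval g_ds [enc_rule x, enc_fm acc, prod_encode (enc_ratom a, prod_encode (tab d Rl, tab nv Rl))] =
      enc_fm (if fst x = a then Disj (Conj (fst (snd x)) (bodyf (litv d nv) (snd (snd x)))) acc else acc)"
      by (simp add: g_ds_def xe)
  qed
  then show ?thesis by (simp add: e_dstep_def del: ev_fold)
qed


definition deriv :: "hprog \<Rightarrow> (ratom \<Rightarrow> fm) \<Rightarrow> nat \<Rightarrow> ratom \<Rightarrow> fm" where
  "deriv G nv k = (dstep G nv ^^ k) (\<lambda>_. Neg Tru)"

definition cNT :: nat where "cNT = enc_fm (Neg Tru)"

definition g_der :: ex where
  "g_der = App (e_mkTab e_dstep) [App e_fst [Var 1],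
     App e_pair [App e_fst [App e_snd [Var 1]], App e_pair [Var 0, App e_snd [App e_snd [Var 1]]]]]"
lemma wf_g_der[simp]: "wfe (Suc (Suc 0)) g_der" by (simp add: g_der_def)

definition e_deriv :: ex where
  "e_deriv = App (e_iter g_der) [Var 0, App (e_mkTab (e_num cNT)) [Var 1, Z],
     App e_pair [Var 1, App e_pair [Var 2, Var 3]]]"
lemma wf_deriv[simp]: "wfe (Suc (Suc (Suc (Suc 0)))) e_deriv" by (simp add: e_deriv_def)

lemma ev_tab0: "eval (e_mkTab (e_num cNT)) [list_encode (map enc_ratom R), 0] = tab (\<lambda>_. Neg Tru) (rev R)"
  by (rule ev_mkTab) (simp add: cNT_def)

lemma ev_deriv[simp]: "bodyok G R \<Longrightarrow>
  eval e_deriv [k, list_encode (map enc_ratom R), list_encode (map enc_rule G), tab nv (rev R)]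
   = tab (deriv G nv k) (rev R)"
proof -
  assume ok: "bodyok G R"
  then have ok': "bodyok G (rev R)" by (simp add: bodyok_def)
  let ?p = "prod_encode (list_encode (map enc_ratom R), prod_encode (list_encode (map enc_rule G), tab nv (rev R)))"
  have step: "eval g_der [tab d (rev R), ?p] = tab (dstep G nv d) (rev R)" for d
    unfolding g_der_def using ok' by (simp add: ev_mkTab)
  have "((\<lambda>v. eval g_der [v, ?p]) ^^ k) (tab (\<lambda>_. Neg Tru) (rev R)) = tab (deriv G nv k) (rev R)"
    by (induction k) (simp_all add: deriv_def step)
  then show ?thesis by (simp add: e_deriv_def ev_tab0)
qed

definition psi :: "hprog \<Rightarrow> nat \<Rightarrow> (ratom \<Rightarrow> fm) \<times> (ratom \<Rightarrow> fm) \<Rightarrow> (ratom \<Rightarrow> fm) \<times> (ratom \<Rightarrow> fm)" where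
  "psi G K s = (deriv G (snd s) K, \<lambda>a. Neg (deriv G (\<lambda>x. Neg (fst s x)) K a))"

definition g_neg :: ex where "g_neg = App e_pair [e_num 3, App e_lookup [Var 1, Var 0]]"
lemma wf_g_neg[simp]: "wfe (Suc (Suc 0)) g_neg" by (simp add: g_neg_def)
lemma ev_negtab: "eval (e_mkTab g_neg) [list_encode (map enc_ratom R), tab f (rev R)] = tab (\<lambda>a. Neg (f a)) (rev R)"
  by (rule ev_mkTab) (simp add: g_neg_def)

definition e_psi :: ex where
  "e_psi = App e_pair [
     App e_deriv [App e_fst [Var 1], App e_fst [App e_snd [Var 1]], App e_snd [App e_snd [Var 1]], App e_snd [Var 0]],
     App (e_mkTab g_neg) [App e_fst [App e_snd [Var 1]],
        App e_deriv [App e_fst [Var 1], App e_fst [App e_snd [Var 1]], App e_snd [App e_snd [Var 1]],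
           App (e_mkTab g_neg) [App e_fst [App e_snd [Var 1]], App e_fst [Var 0]]]]]"
lemma wf_psi[simp]: "wfe (Suc (Suc 0)) e_psi" by (simp add: e_psi_def)

lemma ev_psi: "bodyok G R \<Longrightarrow>
  eval e_psi [prod_encode (tab (fst s) (rev R), tab (snd s) (rev R)),
     prod_encode (K, prod_encode (list_encode (map enc_ratom R), list_encode (map enc_rule G)))]
  = prod_encode (tab (fst (psi G K s)) (rev R), tab (snd (psi G K s)) (rev R))"
  by (simp add: e_psi_def psi_def ev_negtab)

definition phi :: "nat list \<Rightarrow> hprog \<Rightarrow> (ratom \<Rightarrow> fm) \<times> (ratom \<Rightarrow> fm)" where
  "phi Fl P = (let G = grules Fl P; K = list_encode (map enc_rule G) in
     (psi G K ^^ (K + K + 2)) (\<lambda>_. Neg Tru, \<lambda>_. Neg Tru))"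

definition core2 :: "ex \<Rightarrow> ex" where
  "core2 sel = App e_lookup [App sel [App (e_iter e_psi)
      [App e_add [App e_add [Var 1, Var 1], e_num 2],
       App e_pair [App (e_mkTab (e_num cNT)) [Var 2, Z], App (e_mkTab (e_num cNT)) [Var 2, Z]],
       App e_pair [Var 1, App e_pair [Var 2, Var 1]]]], Var 0]"
lemma wf_core2[simp]: "wfe (Suc 0) sel \<Longrightarrow> wfe (Suc (Suc (Suc 0))) (core2 sel)" by (simp add: core2_def)

definition e_phi :: "ex \<Rightarrow> nat list \<Rightarrow> ex" where
  "e_phi sel Fl = App (core2 sel) [App e_snd [Var 0], App (e_grules Fl) [App e_fst [Var 0]],
      App e_ratoms [App e_snd [Var 0], App (e_grules Fl) [App e_fst [Var 0]]]]"
lemma wf_phi[simp]: "wfe (Suc 0) sel \<Longrightarrow> wfe (Suc 0) (e_phi sel Fl)" by (simp add: e_phi_def)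

lemma ratoms_set: "set (ratoms A G) = insert A (fst ` set G \<union> (\<Union>r\<in>set G. lit_atom ` set (snd (snd r))))"
proof -
  have "set (foldl (\<lambda>acc r. foldl (\<lambda>acc l. lit_atom l # acc) (fst r # acc) (snd (snd r))) acc G)
     = set acc \<union> (fst ` set G \<union> (\<Union>r\<in>set G. lit_atom ` set (snd (snd r))))" for acc
  proof (induction G arbitrary: acc)
    case Nil then show ?case by simp
  next
    case (Cons r G)
    have "set (foldl (\<lambda>acc l. lit_atom l # acc) acc' b) = set acc' \<union> lit_atom ` set b" for acc' b
      by (induction b arbitrary: acc') auto
    then show ?case using Cons by auto
  qed
  then show ?thesis by (simp add: ratoms_def)
qed

lemma bodyok_ratoms: "bodyok G (ratoms A G)"
  by (auto simp: bodyok_def ratoms_set)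

lemma ev_phi_gen:
  assumes sel: "\<And>a b. eval sel [prod_encode (a, b)] = selN (a, b)"
    and selH: "\<And>t f. selN (tab t (rev (ratoms A (grules Fl P))), tab f (rev (ratoms A (grules Fl P))))
        = tab (selH (t, f)) (rev (ratoms A (grules Fl P)))"
  shows "eval (e_phi sel Fl) [enc_input P A] = enc_fm (selH (phi Fl P) A)"
proof -
  let ?G = "grules Fl P"
  let ?R = "ratoms A ?G"
  let ?K = "list_encode (map enc_rule ?G)"
  let ?p = "prod_encode (?K, prod_encode (list_encode (map enc_ratom ?R), ?K))"
  have ok: "bodyok ?G ?R" by (rule bodyok_ratoms)
  have it: "((\<lambda>v. eval e_psi [v, ?p]) ^^ n) (prod_encode (tab (\<lambda>_. Neg Tru) (rev ?R), tab (\<lambda>_. Neg Tru) (rev ?R)))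
     = prod_encode (tab (fst ((psi ?G ?K ^^ n) (\<lambda>_. Neg Tru, \<lambda>_. Neg Tru))) (rev ?R),
                    tab (snd ((psi ?G ?K ^^ n) (\<lambda>_. Neg Tru, \<lambda>_. Neg Tru))) (rev ?R))" for n
  proof (induction n)
    case 0 then show ?case by simp
  next
    case (Suc n) then show ?case using ev_psi[OF ok] by simp
  qed
  have A: "A \<in> set (rev ?R)" by (simp add: ratoms_set)
  have A2: "A \<in> set ?R" by (simp add: ratoms_set)
  show ?thesis
    unfolding e_phi_def core2_def
    apply (simp add: enc_input_def ev_tab0 del: ev_iter)
    apply (simp only: ev_iter it)
    apply (simp add: sel selH A A2 phi_def Let_def del: funpow.simps)
    done
qed


section \<open>Semantic lemmas on formulas\<close>

lemma trm_val_agree: "(\<forall>x\<in>trm_vars t. va x = vb x) \<Longrightarrow> trm_val M va t = trm_val M vb t"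
  by (cases t) auto

lemma sat_agree: "(\<forall>x\<in>fm_free f. va x = vb x) \<Longrightarrow> sat M va f = sat M vb f"
proof (induction f arbitrary: va vb)
  case (Eq s t) then show ?case using trm_val_agree[of s va vb M] trm_val_agree[of t va vb M] by auto
next
  case (Atm p ts)
  then have "\<forall>t\<in>set ts. trm_val M va t = trm_val M vb t" by (auto intro!: trm_val_agree)
  then have "map (trm_val M va) ts = map (trm_val M vb) ts" by (simp add: map_eq_conv)
  then show ?case by (simp del: map_eq_conv)
next
  case (Conj f1 f2)
  have "sat M va f1 = sat M vb f1" "sat M va f2 = sat M vb f2" using Conj by auto
  then show ?case by simp
next
  case (Disj f1 f2)
  have "sat M va f1 = sat M vb f1" "sat M va f2 = sat M vb f2" using Disj by auto
  then show ?case by simp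
next
  case (Ex x f)
  have "sat M (va(x := d)) f = sat M (vb(x := d)) f" for d
    using Ex.prems by (intro Ex.IH) auto
  then show ?case by simp
qed auto

lemma trm_val_subst: "trm_val M va (trm_subst \<sigma> t) = trm_val M (\<lambda>y. trm_val M va (\<sigma> y)) t"
  by (cases t) auto

lemma sat_subst: "(\<forall>y. trm_vars (\<sigma> y) \<subseteq> {y}) \<Longrightarrow> sat M va (fm_subst \<sigma> f) = sat M (\<lambda>y. trm_val M va (\<sigma> y)) f"
proof (induction f arbitrary: \<sigma> va)
  case (Eq s t) then show ?case by (simp add: trm_val_subst)
next
  case (Atm p ts) then show ?case by (simp add: trm_val_subst comp_def)
next
  case (Ex x f)
  let ?s = "\<sigma>(x := V x)"
  have h: "\<forall>y. trm_vars (?s y) \<subseteq> {y}" using Ex.prems by auto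
  have "sat M (va(x := d)) (fm_subst ?s f) = sat M ((\<lambda>y. trm_val M va (\<sigma> y))(x := d)) f" for d
  proof -
    have "sat M (va(x := d)) (fm_subst ?s f) = sat M (\<lambda>y. trm_val M (va(x := d)) (?s y)) f"
      using Ex.IH[OF h] by blast
    also have "(\<lambda>y. trm_val M (va(x := d)) (?s y)) = (\<lambda>y. trm_val M va (\<sigma> y))(x := d)"
    proof
      fix y show "trm_val M (va(x := d)) (?s y) = ((\<lambda>y. trm_val M va (\<sigma> y))(x := d)) y"
      proof (cases "y = x")
        case False
        then have "x \<notin> trm_vars (\<sigma> y)" using Ex.prems by auto
        then show ?thesis using False by (auto intro!: trm_val_agree)
      qed simp
    qed
    finally show ?thesis .
  qed
  then show ?case by simp
qed auto

fun upd :: "'d struct \<Rightarrow> (nat \<times> nat) list \<Rightarrow> (nat \<Rightarrow> 'd) \<Rightarrow> nat \<Rightarrow> 'd" where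
  "upd M [] va = va"
| "upd M (x # l) va = (upd M l va)(fst x := fst M (snd x))"

lemma sat_wrap: "sat M va (wrap l c) = sat M (upd M l va) c"
  unfolding wrap_def
proof (induction l arbitrary: c)
  case (Cons x l) then show ?case by (simp add: fun_upd_def)
qed simp

lemma fm_free_wrap: "fm_free (wrap l c) = fm_free c - fst ` set l"
  unfolding wrap_def by (induction l arbitrary: c) auto

lemma alookup_foldl_notin: "k \<notin> fst ` set l \<Longrightarrow> foldl (\<lambda>acc x. if fst x = k then snd x else acc) a l = a"
  by (induction l arbitrary: a) auto

lemma alookup_foldl_in: "k \<in> fst ` set l \<Longrightarrow> foldl (\<lambda>acc x. if fst x = k then snd x else acc) a l = foldl (\<lambda>acc x. if fst x = k then snd x else acc) b l"
proof (induction l arbitrary: a b)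
  case (Cons x l)
  show ?case
  proof (cases "k \<in> fst ` set l")
    case True then show ?thesis using Cons.IH by simp
  next
    case False
    then have "fst x = k" using Cons.prems by auto
    then show ?thesis using False by (simp add: alookup_foldl_notin)
  qed
qed simp

lemma alookup_foldl: "foldl (\<lambda>acc x. if fst x = k then snd x else acc) a l = (if k \<in> fst ` set l then alookup l k else a)"
  unfolding alookup_def using alookup_foldl_in[of k l a 0] alookup_foldl_notin[of k l a] by auto

lemma alookup_Cons: "alookup (x # l) k = (if k \<in> fst ` set l then alookup l k else if fst x = k then snd x else 0)"
  using alookup_foldl[of k "if fst x = k then snd x else 0" l] by (simp add: alookup_def)

lemma alookup_in: "distinct (map fst l) \<Longrightarrow> (k, v) \<in> set l \<Longrightarrow> alookup l k = v"
  by (induction l) (auto simp: alookup_Cons image_iff)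

lemma alookup_mem: "k \<in> fst ` set l \<Longrightarrow> (k, alookup l k) \<in> set l"
  by (induction l) (auto simp: alookup_Cons)

lemma upd_val: "distinct (map fst l) \<Longrightarrow> upd M l va y = (if y \<in> fst ` set l then fst M (alookup l y) else va y)"
  by (induction l) (auto simp: alookup_Cons)

section \<open>The substitution lists\<close>

lemma set_ext: "set (ext k c acc L) = set acc \<union> (\<lambda>l. (k, c) # l) ` set L"
  unfolding ext_def by (induction L arbitrary: acc) auto

lemma set_stp: "set (stp Fl k L) = {(k, c) # l | c l. c \<in> set Fl \<and> l \<in> set L}"
proof -
  have "set (foldl (\<lambda>acc c. ext k c acc L) acc Fs) = set acc \<union> {(k, c) # l | c l. c \<in> set Fs \<and> l \<in> set L}" for acc Fs
    by (induction Fs arbitrary: acc) (auto simp: set_ext)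
  then show ?thesis by (simp add: stp_def)
qed

lemma set_allth: "set (allth Fl n) = {l. map fst l = rev [0..<n] \<and> (\<forall>x\<in>set l. snd x \<in> set Fl)}"
proof (induction n)
  case 0 then show ?case by (auto simp: allth_def)
next
  case (Suc n)
  have e: "allth Fl (Suc n) = stp Fl n (allth Fl n)" by (simp add: allth_def)
  show ?case
  proof (intro set_eqI iffI)
    fix l assume "l \<in> set (allth Fl (Suc n))"
    then obtain c l' where l: "l = (n, c) # l'" "c \<in> set Fl" "l' \<in> set (allth Fl n)"
      unfolding e set_stp by blast
    from l(3) Suc have "map fst l' = rev [0..<n]" "\<forall>x\<in>set l'. snd x \<in> set Fl" by blast+
    then show "l \<in> {l. map fst l = rev [0..<Suc n] \<and> (\<forall>x\<in>set l. snd x \<in> set Fl)}"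
      using l by simp
  next
    fix l assume l: "l \<in> {l. map fst l = rev [0..<Suc n] \<and> (\<forall>x\<in>set l. snd x \<in> set Fl)}"
    then obtain x l' where lx: "l = x # l'" by (cases l) auto
    obtain a c where x: "x = (a, c)" by (cases x)
    from l lx x have "a = n" "map fst l' = rev [0..<n]" "c \<in> set Fl" "\<forall>x\<in>set l'. snd x \<in> set Fl" by auto
    then have "l' \<in> set (allth Fl n)" using Suc by blast
    then show "l \<in> set (allth Fl (Suc n))" unfolding e set_stp using lx x \<open>a = n\<close> \<open>c \<in> set Fl\<close> by blast
  qed
qed


fun rvars :: "ratom \<Rightarrow> nat set" where
  "rvars (RA p ts) = (\<Union>t\<in>set ts. trm_vars t)"

lemma le_pe1: "x \<le> a \<Longrightarrow> x \<le> prod_encode (a, b)" using prod_encode_ge1[of a b] by linarith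
lemma le_pe2: "x \<le> b \<Longrightarrow> x \<le> prod_encode (a, b)" using prod_encode_ge2[of b a] by linarith
lemma le_le: "x \<le> e \<Longrightarrow> e \<in> set xs \<Longrightarrow> x \<le> list_encode xs" using list_encode_ge_elem[of e xs] by linarith

lemma trm_bound: "x \<in> trm_vars t \<Longrightarrow> x \<le> enc_trm t"
  by (cases t) (auto intro: le_pe2)

lemma ratom_bound: "x \<in> rvars a \<Longrightarrow> x \<le> enc_ratom a"
  by (cases a) (auto intro!: le_pe2 le_le[OF trm_bound] )

lemma fm_bound: "x \<in> fm_free c \<Longrightarrow> x \<le> enc_fm c"
proof (induction c)
  case (Eq s t)
  from Eq have "x \<in> trm_vars s \<or> x \<in> trm_vars t" by simp
  then have "x \<le> prod_encode (enc_trm s, enc_trm t)" using le_pe1 le_pe2 trm_bound by blast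
  then show ?case by (simp add: le_pe2)
next
  case (Atm p ts) then show ?case by (auto intro!: le_pe2 le_le[OF trm_bound])
next
  case (Neg f) then show ?case by (auto intro!: le_pe2)
next
  case (Conj f g)
  then have "x \<le> prod_encode (enc_fm f, enc_fm g)" using le_pe1 le_pe2 by auto
  then show ?case by (simp add: le_pe2)
next
  case (Disj f g)
  then have "x \<le> prod_encode (enc_fm f, enc_fm g)" using le_pe1 le_pe2 by auto
  then show ?case by (simp add: le_pe2)
next
  case (Ex y f) then show ?case by (auto intro!: le_pe2)
qed simp

lemma lit_bound: "x \<le> enc_ratom (lit_atom l) \<Longrightarrow> x \<le> enc_lit l"
  by (cases l) (auto intro: le_pe2)

lemma rule_bound:
  assumes "x \<in> rvars h \<or> x \<in> fm_free c \<or> (\<exists>l\<in>set b. x \<in> rvars (lit_atom l))"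
  shows "x \<le> enc_rule (h, c, b)"
proof -
  have "x \<le> enc_ratom h \<or> x \<le> enc_fm c \<or> x \<le> list_encode (map enc_lit b)"
  proof -
    { fix l assume l: "l \<in> set b" "x \<in> rvars (lit_atom l)"
      then have "x \<le> enc_lit l" by (intro lit_bound ratom_bound)
      then have "x \<le> list_encode (map enc_lit b)" using l by (intro le_le[of x "enc_lit l"]) auto }
    then show ?thesis using assms ratom_bound fm_bound by blast
  qed
  then show ?thesis by (auto intro: le_pe1 le_pe2)
qed

lemma trm_subst_cong: "(\<forall>x\<in>trm_vars t. \<sigma> x = \<sigma>' x) \<Longrightarrow> trm_subst \<sigma> t = trm_subst \<sigma>' t"
  by (cases t) auto

lemma ratom_subst_cong: "(\<forall>x\<in>rvars a. \<sigma> x = \<sigma>' x) \<Longrightarrow> ratom_subst \<sigma> a = ratom_subst \<sigma>' a"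
  by (cases a) (auto intro!: trm_subst_cong)

lemma lit_subst_cong: "(\<forall>x\<in>rvars (lit_atom l). \<sigma> x = \<sigma>' x) \<Longrightarrow> lit_subst \<sigma> l = lit_subst \<sigma>' l"
  by (cases l) (auto intro!: ratom_subst_cong)

lemma set_grules: "set (grules Fl P) = (\<Union>r\<in>set P. ground r ` set (allth Fl (Suc (enc_rule r))))"
proof -
  have inner: "set (foldl (\<lambda>acc l. ground r l # acc) acc L) = set acc \<union> ground r ` set L" for r acc L
    by (induction L arbitrary: acc) auto
  have "set (foldl (\<lambda>acc r. foldl (\<lambda>acc l. ground r l # acc) acc (allth Fl (Suc (enc_rule r)))) acc P)
     = set acc \<union> (\<Union>r\<in>set P. ground r ` set (allth Fl (Suc (enc_rule r))))" for acc
  proof (induction P arbitrary: acc)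
    case Nil then show ?case by simp
  next
    case (Cons r P)
    show ?case by (simp del: enc_rule_simp add: Cons inner Un_assoc)
  qed
  then show ?thesis by (simp add: grules_def)
qed

lemma allth_keys: "l \<in> set (allth Fl n) \<Longrightarrow> distinct (map fst l) \<and> fst ` set l = {..<n}"
proof -
  assume "l \<in> set (allth Fl n)"
  then have "map fst l = rev [0..<n]" by (simp add: set_allth)
  then have "distinct (map fst l)" "set (map fst l) = {..<n}" by (metis distinct_rev distinct_upt, auto)
  then show ?thesis by simp
qed

lemma ground_match:
  assumes l: "l \<in> set (allth Fl (Suc (enc_rule (h, c, b))))"
    and th: "\<forall>y \<le> enc_rule (h, c, b). \<theta> y = alookup l y"
  shows "ratom_subst (sig l) h = ratom_subst (C \<circ> \<theta>) h"
    and "map (lit_subst (sig l)) b = map (lit_subst (C \<circ> \<theta>)) b"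
    and "holds M (wrap l c) = holds M (fm_subst (C \<circ> \<theta>) c)"
proof -
  let ?B = "enc_rule (h, c, b)"
  have keys: "distinct (map fst l)" "fst ` set l = {..<Suc ?B}" using allth_keys[OF l] by auto
  have sg: "sig l y = (C \<circ> \<theta>) y" if "y \<le> ?B" for y using th that by (simp add: sig_def)
  show "ratom_subst (sig l) h = ratom_subst (C \<circ> \<theta>) h"
  proof (rule ratom_subst_cong, intro ballI sg)
    fix x assume "x \<in> rvars h" then show "x \<le> ?B" by (intro rule_bound) simp
  qed
  show "map (lit_subst (sig l)) b = map (lit_subst (C \<circ> \<theta>)) b"
  proof (rule map_cong[OF refl], rule lit_subst_cong, intro ballI sg)
    fix x l' assume "l' \<in> set b" "x \<in> rvars (lit_atom l')" then show "x \<le> ?B" by (intro rule_bound) blast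
  qed
  have w: "sat M va (wrap l c) = sat M (\<lambda>y. fst M (\<theta> y)) c" for va
  proof -
    have "sat M va (wrap l c) = sat M (upd M l va) c" by (rule sat_wrap)
    also have "\<dots> = sat M (\<lambda>y. fst M (\<theta> y)) c"
    proof (rule sat_agree, intro ballI)
      fix y assume "y \<in> fm_free c"
      then have "y \<le> ?B" by (intro rule_bound) auto
      then show "upd M l va y = fst M (\<theta> y)" using upd_val[OF keys(1), of M va y] keys(2) th by auto
    qed
    finally show ?thesis .
  qed
  have s: "sat M va (fm_subst (C \<circ> \<theta>) c) = sat M (\<lambda>y. fst M (\<theta> y)) c" for va
    by (subst sat_subst) auto
  show "holds M (wrap l c) = holds M (fm_subst (C \<circ> \<theta>) c)"
    unfolding holds_def using w s by simp
qed

lemma reduct_grules: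
  assumes "Fl \<noteq> []"
  shows "reduct (set Fl) P M = {(fst g, snd (snd g)) | g. g \<in> set (grules Fl P) \<and> holds M (fst (snd g))}"
proof (intro set_eqI iffI)
  fix z assume "z \<in> reduct (set Fl) P M"
  then obtain h c b \<theta> where z: "z = (ratom_subst (C \<circ> \<theta>) h, map (lit_subst (C \<circ> \<theta>)) b)"
    and r: "(h, c, b) \<in> set P" and rg: "range \<theta> \<subseteq> set Fl" and hd: "holds M (fm_subst (C \<circ> \<theta>) c)"
    unfolding reduct_def by blast
  let ?B = "enc_rule (h, c, b)"
  let ?l = "map (\<lambda>y. (y, \<theta> y)) (rev [0..<Suc ?B])"
  have l: "?l \<in> set (allth Fl (Suc ?B))" using rg by (auto simp: set_allth map_idI)
  have th: "\<forall>y \<le> ?B. \<theta> y = alookup ?l y"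
  proof (intro allI impI)
    fix y assume y: "y \<le> ?B"
    have d: "distinct (map fst ?l)" by (simp add: comp_def)
    have "y < Suc ?B" using y by linarith
    then have "y \<in> set (rev [0..<Suc ?B])" by (simp only: set_rev set_upt atLeastLessThan_iff) simp
    then have "(y, \<theta> y) \<in> set ?l" by auto
    then show "\<theta> y = alookup ?l y" using d by (simp add: alookup_in)
  qed
  note gm = ground_match[OF l th]
  have "ground (h, c, b) ?l \<in> set (grules Fl P)" using r l unfolding set_grules by blast
  moreover have "z = (fst (ground (h, c, b) ?l), snd (snd (ground (h, c, b) ?l)))"
    using gm z by (simp add: ground_def)
  moreover have "holds M (fst (snd (ground (h, c, b) ?l)))"
  proof -
    have e: "fst (snd (ground (h, c, b) ?l)) = wrap ?l c" by (simp add: ground_def)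
    have "holds M (wrap ?l c)" using gm(3) hd by blast
    then show ?thesis unfolding e .
  qed
  ultimately show "z \<in> {(fst g, snd (snd g)) | g. g \<in> set (grules Fl P) \<and> holds M (fst (snd g))}" by blast
next
  fix z assume "z \<in> {(fst g, snd (snd g)) | g. g \<in> set (grules Fl P) \<and> holds M (fst (snd g))}"
  then obtain r l where z: "z = (fst (ground r l), snd (snd (ground r l)))" and r: "r \<in> set P"
    and l: "l \<in> set (allth Fl (Suc (enc_rule r)))" and hd: "holds M (fst (snd (ground r l)))"
    unfolding set_grules by blast
  obtain h c b where re: "r = (h, c, b)" by (cases r) auto
  let ?B = "enc_rule (h, c, b)"
  define \<theta> where "\<theta> y = (if y \<le> ?B then alookup l y else hd Fl)" for y
  have keys: "distinct (map fst l)" "fst ` set l = {..<Suc ?B}" using allth_keys l re by auto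
  have rg: "range \<theta> \<subseteq> set Fl"
  proof
    fix v assume "v \<in> range \<theta>"
    then obtain y where v: "v = \<theta> y" by auto
    show "v \<in> set Fl"
    proof (cases "y \<le> ?B")
      case True
      then have "(y, alookup l y) \<in> set l" using keys by (intro alookup_mem) auto
      then show ?thesis using l re True v by (auto simp: set_allth \<theta>_def)
    next
      case False then show ?thesis using v assms by (simp add: \<theta>_def)
    qed
  qed
  have th: "\<forall>y \<le> ?B. \<theta> y = alookup l y" by (simp add: \<theta>_def)
  note gm = ground_match[OF l[unfolded re] th]
  have e: "fst (snd (ground r l)) = wrap l c" by (simp add: re ground_def)
  have "holds M (wrap l c)" using hd unfolding e .
  then have hd2: "holds M (fm_subst (C \<circ> \<theta>) c)" using gm(3) by blast
  have z': "z = (ratom_subst (C \<circ> \<theta>) h, map (lit_subst (C \<circ> \<theta>)) b)"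
    using z gm(1,2) re by (simp add: ground_def)
  show "z \<in> reduct (set Fl) P M"
    unfolding reduct_def using z' r re rg hd2 by blast
qed


lemma stab:
  fixes s :: "nat \<Rightarrow> 'a set"
  assumes sf: "\<And>j. s (Suc j) = f (s j)" and inc: "\<And>j. s j \<subseteq> s (Suc j)"
    and bnd: "\<And>j. s j - s 0 \<subseteq> X" and fin: "finite X" and card: "card X \<le> m"
  shows "s (m + k) = s m"
proof -
  have "\<exists>j\<le>m. s j = s (Suc j)"
  proof (rule ccontr)
    assume "\<not> (\<exists>j\<le>m. s j = s (Suc j))"
    then have strict: "\<And>j. j \<le> m \<Longrightarrow> s j \<subset> s (Suc j)" using inc by blast
    have "j \<le> Suc m \<Longrightarrow> j \<le> card (s j - s 0)" for j
    proof (induction j)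
      case 0 then show ?case by simp
    next
      case (Suc j)
      have fin2: "finite (s (Suc j) - s 0)" using bnd fin finite_subset by blast
      have "s j - s 0 \<subset> s (Suc j) - s 0"
      proof -
        have sub: "s 0 \<subseteq> s j"
        proof (induction j)
          case (Suc j) then show ?case using inc[of j] by blast
        qed simp
        show ?thesis using strict[of j] Suc.prems sub by auto
      qed
      then have "card (s j - s 0) < card (s (Suc j) - s 0)" by (rule psubset_card_mono[OF fin2])
      then show ?case using Suc by simp
    qed
    then have "Suc m \<le> card (s (Suc m) - s 0)" by simp
    moreover have "card (s (Suc m) - s 0) \<le> card X" using bnd fin by (intro card_mono) auto
    ultimately show False using card by simp
  qed
  then obtain j where j: "j \<le> m" "s j = s (Suc j)" by blast
  have const: "s (j + i) = s j" for i
  proof (induction i)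
    case 0 then show ?case by simp
  next
    case (Suc i)
    have "s (j + Suc i) = f (s (j + i))" using sf[of "j + i"] by simp
    also have "\<dots> = f (s j)" using Suc.IH by simp
    also have "\<dots> = s (Suc j)" using sf[of j] by simp
    also have "\<dots> = s j" using j(2) by simp
    finally show ?case .
  qed
  have "s (m + k) = s j" using const[of "m - j + k"] j(1) by simp
  moreover have "s m = s j" using const[of "m - j"] j(1) by simp
  ultimately show ?thesis by simp
qed

lemma least_model_mono: "R \<subseteq> R' \<Longrightarrow> least_model R \<subseteq> least_model R'"
  unfolding least_model_def by blast

lemma least_model_closed: "(h, b) \<in> R \<Longrightarrow> set b \<subseteq> least_model R \<Longrightarrow> h \<in> least_model R"
  unfolding least_model_def by blast

lemma least_model_least: "(\<forall>h b. (h, b) \<in> R \<longrightarrow> set b \<subseteq> Y \<longrightarrow> h \<in> Y) \<Longrightarrow> least_model R \<subseteq> Y"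
  unfolding least_model_def by blast

definition progN :: "gprog \<Rightarrow> ratom set \<Rightarrow> (lit \<times> lit list) set" where
  "progN Q N = {(Pos h, b) | h b. (h, b) \<in> Q} \<union> {(NegL a, []) | a. a \<in> N}"

lemma prog_t_N: "prog_t Q I = progN Q {x. NegL x \<in> I}"
  unfolding prog_t_def progN_def by auto
lemma prog_tu_N: "prog_tu H Q I = progN Q {x. x \<in> H \<and> Pos x \<notin> I}"
  unfolding prog_tu_def progN_def by auto

definition tp :: "gprog \<Rightarrow> ratom set \<Rightarrow> ratom set \<Rightarrow> ratom set" where
  "tp Q N Y = {h | h b. (h, b) \<in> Q \<and> (\<forall>l\<in>set b. case l of Pos x \<Rightarrow> x \<in> Y | NegL x \<Rightarrow> x \<in> N)}"

lemma tp_mono: "Y \<subseteq> Y' \<Longrightarrow> tp Q N Y \<subseteq> tp Q N Y'"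
  unfolding tp_def by (fastforce split: lit.splits)

lemma tp_chain: "(tp Q N ^^ k) {} \<subseteq> (tp Q N ^^ Suc k) {}"
  by (induction k) (auto intro: tp_mono[THEN subsetD])

lemma tp_intro: "(h, b) \<in> Q \<Longrightarrow> \<forall>l\<in>set b. (case l of Pos x \<Rightarrow> x \<in> Y | NegL x \<Rightarrow> x \<in> N) \<Longrightarrow> h \<in> tp Q N Y"
  unfolding tp_def by blast

lemma tp_elim: "h \<in> tp Q N Y \<Longrightarrow> \<exists>b. (h, b) \<in> Q \<and> (\<forall>l\<in>set b. (case l of Pos x \<Rightarrow> x \<in> Y | NegL x \<Rightarrow> x \<in> N))"
  unfolding tp_def by blast

lemma tp_sub: "tp Q N Y \<subseteq> fst ` Q"
  unfolding tp_def by force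

lemma tp_heads: "(tp Q N ^^ k) {} \<subseteq> fst ` Q"
  by (cases k) (auto dest: tp_sub[THEN subsetD])

lemma tp_stable:
  assumes "finite (fst ` Q)" "card (fst ` Q) \<le> K"
  shows "(tp Q N ^^ (K + k)) {} = (tp Q N ^^ K) {}"
  by (rule stab[where f = "tp Q N" and X = "fst ` Q"]) (use assms tp_chain tp_heads in auto)

lemma lm_progN:
  assumes "finite (fst ` Q)" "card (fst ` Q) \<le> K"
  shows "Pos a \<in> least_model (progN Q N) \<longleftrightarrow> a \<in> (tp Q N ^^ K) {}"
proof
  let ?S = "(tp Q N ^^ K) {}"
  have fx: "tp Q N ?S = ?S" using tp_stable[OF assms, where N=N and k=1] by simp
  let ?L = "Pos ` ?S \<union> NegL ` N"
  have "least_model (progN Q N) \<subseteq> ?L"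
  proof (rule least_model_least, intro allI impI)
    fix h b assume hb: "(h, b) \<in> progN Q N" and sb: "set b \<subseteq> ?L"
    show "h \<in> ?L"
    proof (cases "\<exists>x. h = Pos x")
      case True
      then obtain x where hx: "h = Pos x" by blast
      with hb have xb: "(x, b) \<in> Q" unfolding progN_def by auto
      have "\<forall>l\<in>set b. case l of Pos y \<Rightarrow> y \<in> ?S | NegL y \<Rightarrow> y \<in> N"
        using sb by (auto split: lit.splits)
      then have "x \<in> tp Q N ?S" using xb by (intro tp_intro)
      then show ?thesis using hx fx by simp
    next
      case False
      then show ?thesis using hb unfolding progN_def by auto
    qed
  qed
  then show "Pos a \<in> least_model (progN Q N) \<Longrightarrow> a \<in> ?S" by auto
next
  have neg: "NegL x \<in> least_model (progN Q N)" if "x \<in> N" for x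
    using that by (intro least_model_closed[of _ "[]"]) (auto simp: progN_def)
  have "\<forall>a\<in>(tp Q N ^^ k) {}. Pos a \<in> least_model (progN Q N)" for k
  proof (induction k)
    case 0 then show ?case by simp
  next
    case (Suc k)
    show ?case
    proof
      fix a assume "a \<in> (tp Q N ^^ Suc k) {}"
      then have "a \<in> tp Q N ((tp Q N ^^ k) {})" by simp
      then obtain b where ab: "(a, b) \<in> Q" and bs: "\<forall>l\<in>set b. case l of Pos x \<Rightarrow> x \<in> (tp Q N ^^ k) {} | NegL x \<Rightarrow> x \<in> N"
        by (blast dest: tp_elim)
      have "set b \<subseteq> least_model (progN Q N)"
      proof
        fix l assume lb: "l \<in> set b"
        have c: "case l of Pos x \<Rightarrow> x \<in> (tp Q N ^^ k) {} | NegL x \<Rightarrow> x \<in> N" using bs lb by blast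
        show "l \<in> least_model (progN Q N)"
        proof (cases l)
          case (Pos x) with c Suc.IH show ?thesis by auto
        next
          case (NegL x) with c neg show ?thesis by auto
        qed
      qed
      moreover have "(Pos a, b) \<in> progN Q N" using ab by (auto simp: progN_def)
      ultimately show "Pos a \<in> least_model (progN Q N)" by (rule least_model_closed[rotated])
    qed
  qed
  then show "a \<in> (tp Q N ^^ K) {} \<Longrightarrow> Pos a \<in> least_model (progN Q N)" by blast
qed

section \<open>Semantics of the symbolic formulas\<close>

lemma sat_bodyf: "sat M va (bodyf val b) \<longleftrightarrow> (\<forall>l\<in>set b. sat M va (val l))"
proof -
  have "sat M va (foldl (\<lambda>acc l. Conj (val l) acc) acc b) \<longleftrightarrow> sat M va acc \<and> (\<forall>l\<in>set b. sat M va (val l))" for acc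
    by (induction b arbitrary: acc) auto
  then show ?thesis by (simp add: bodyf_def)
qed

lemma sat_dstep: "sat M va (dstep G nv d a) \<longleftrightarrow>
  (\<exists>g\<in>set G. fst g = a \<and> sat M va (fst (snd g)) \<and> sat M va (bodyf (litv d nv) (snd (snd g))))"
proof -
  have "sat M va (foldl (\<lambda>acc r. if fst r = a then Disj (Conj (fst (snd r)) (bodyf (litv d nv) (snd (snd r)))) acc else acc) acc G)
    \<longleftrightarrow> sat M va acc \<or> (\<exists>g\<in>set G. fst g = a \<and> sat M va (fst (snd g)) \<and> sat M va (bodyf (litv d nv) (snd (snd g))))" for acc
    by (induction G arbitrary: acc) auto
  then show ?thesis by (simp add: dstep_def)
qed

definition Qof :: "'d struct \<Rightarrow> (nat \<Rightarrow> 'd) \<Rightarrow> hprog \<Rightarrow> gprog" where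
  "Qof M va G = {(fst g, snd (snd g)) | g. g \<in> set G \<and> sat M va (fst (snd g))}"

definition hok :: "ratom set \<Rightarrow> hprog \<Rightarrow> bool" where
  "hok H G \<longleftrightarrow> (\<forall>g\<in>set G. fst g \<in> H \<and> (\<forall>l\<in>set (snd (snd g)). lit_atom l \<in> H))"

lemma sat_deriv:
  assumes ok: "hok H G" and nv: "\<forall>x\<in>H. sat M va (nv x) \<longleftrightarrow> x \<in> N"
  shows "sat M va (deriv G nv k a) \<longleftrightarrow> a \<in> (tp (Qof M va G) N ^^ k) {}"
proof (induction k arbitrary: a)
  case 0 then show ?case by (simp add: deriv_def)
next
  case (Suc k)
  have d: "deriv G nv (Suc k) = dstep G nv (deriv G nv k)" by (simp add: deriv_def)
  have lit: "sat M va (litv (deriv G nv k) nv l) \<longleftrightarrow> (case l of Pos x \<Rightarrow> x \<in> (tp (Qof M va G) N ^^ k) {} | NegL x \<Rightarrow> x \<in> N)"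
    if "lit_atom l \<in> H" for l
    using that Suc nv by (cases l) (auto simp: litv_def)
  show ?case
  proof
    assume "sat M va (deriv G nv (Suc k) a)"
    then obtain g where g: "g \<in> set G" "fst g = a" "sat M va (fst (snd g))"
      "\<forall>l\<in>set (snd (snd g)). sat M va (litv (deriv G nv k) nv l)"
      unfolding d sat_dstep sat_bodyf by blast
    then have "\<forall>l\<in>set (snd (snd g)). case l of Pos x \<Rightarrow> x \<in> (tp (Qof M va G) N ^^ k) {} | NegL x \<Rightarrow> x \<in> N"
      using lit ok by (auto simp: hok_def)
    moreover have "(fst g, snd (snd g)) \<in> Qof M va G" unfolding Qof_def using g(1,3) by blast
    ultimately have "fst g \<in> tp (Qof M va G) N ((tp (Qof M va G) N ^^ k) {})" by (intro tp_intro)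
    then show "a \<in> (tp (Qof M va G) N ^^ Suc k) {}" using g(2) by simp
  next
    assume "a \<in> (tp (Qof M va G) N ^^ Suc k) {}"
    then have "a \<in> tp (Qof M va G) N ((tp (Qof M va G) N ^^ k) {})" by simp
    then obtain b where ab: "(a, b) \<in> Qof M va G"
      and bs: "\<forall>l\<in>set b. case l of Pos x \<Rightarrow> x \<in> (tp (Qof M va G) N ^^ k) {} | NegL x \<Rightarrow> x \<in> N"
      by (blast dest: tp_elim)
    from ab obtain g where g: "g \<in> set G" "a = fst g" "b = snd (snd g)" "sat M va (fst (snd g))"
      by (auto simp: Qof_def)
    have "\<forall>l\<in>set b. sat M va (litv (deriv G nv k) nv l)"
      using bs lit ok g by (auto simp: hok_def)
    then show "sat M va (deriv G nv (Suc k) a)"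
      unfolding d sat_dstep sat_bodyf using g by blast
  qed
qed


lemma Psi_mono: "I \<subseteq> J \<Longrightarrow> Psi H Q I \<subseteq> Psi H Q J"
proof -
  assume ij: "I \<subseteq> J"
  have t: "least_model (prog_t Q I) \<subseteq> least_model (prog_t Q J)"
    by (rule least_model_mono) (use ij in \<open>auto simp: prog_t_def\<close>)
  have tu: "least_model (prog_tu H Q J) \<subseteq> least_model (prog_tu H Q I)"
    by (rule least_model_mono) (use ij in \<open>auto simp: prog_tu_def\<close>)
  show ?thesis unfolding Psi_def using t tu by blast
qed

lemma Psi_Pos: "Pos a \<in> Psi H Q I \<longleftrightarrow> Pos a \<in> least_model (prog_t Q I) \<and> a \<in> H"
  unfolding Psi_def by auto

lemma Psi_NegL: "NegL a \<in> Psi H Q I \<longleftrightarrow> a \<in> H \<and> Pos a \<notin> least_model (prog_tu H Q I)"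
  unfolding Psi_def by auto

lemma Psi_range: "Psi H Q I \<subseteq> Pos ` H \<union> NegL ` H"
  unfolding Psi_def by blast

lemma Psi_consistent: "consistent H I \<Longrightarrow> consistent H (Psi H Q I)"
proof -
  assume c: "consistent H I"
  have sub: "prog_t Q I \<subseteq> prog_tu H Q I"
    using c unfolding prog_t_def prog_tu_def consistent_def by blast
  have "\<not> (Pos a \<in> Psi H Q I \<and> NegL a \<in> Psi H Q I)" for a
  proof
    assume a: "Pos a \<in> Psi H Q I \<and> NegL a \<in> Psi H Q I"
    then have "Pos a \<in> least_model (prog_t Q I)" unfolding Psi_def by auto
    then have "Pos a \<in> least_model (prog_tu H Q I)" using least_model_mono[OF sub] by blast
    moreover have "Pos a \<notin> least_model (prog_tu H Q I)" using a unfolding Psi_def by auto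
    ultimately show False by blast
  qed
  then show ?thesis using Psi_range unfolding consistent_def by blast
qed

lemma Psi_iter_consistent: "consistent H ((Psi H Q ^^ j) {})"
proof (induction j)
  case 0 show ?case by (simp add: consistent_def)
next
  case (Suc j) then show ?case by (simp add: Psi_consistent)
qed

lemma Psi_iter_chain: "(Psi H Q ^^ j) {} \<subseteq> (Psi H Q ^^ Suc j) {}"
  by (induction j) (auto intro: Psi_mono[THEN subsetD])

lemma Psi_iter_least: "consistent H J \<Longrightarrow> Psi H Q J = J \<Longrightarrow> (Psi H Q ^^ j) {} \<subseteq> J"
  by (induction j) (auto dest: Psi_mono[of _ J H Q])

lemma lm_heads:
  assumes "finite (fst ` Q)" "card (fst ` Q) \<le> K"
  shows "Pos a \<in> least_model (progN Q N) \<Longrightarrow> a \<in> fst ` Q"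
  using lm_progN[OF assms] tp_heads by blast

lemma WF_iter:
  assumes fin: "finite (fst ` Q)" and card: "card (fst ` Q) \<le> K"
  shows "WF H Q = (Psi H Q ^^ (K + K + 2)) {}"
proof -
  let ?I = "\<lambda>j. (Psi H Q ^^ j) {}"
  let ?X = "Pos ` fst ` Q \<union> NegL ` fst ` Q"
  let ?s = "\<lambda>j. ?I (Suc j)"
  have bnd: "?s j - ?s 0 \<subseteq> ?X" for j
  proof
    fix l assume l: "l \<in> ?s j - ?s 0"
    show "l \<in> ?X"
    proof (cases l)
      case (Pos a)
      with l have "Pos a \<in> Psi H Q (?I j)" by simp
      then have "Pos a \<in> least_model (prog_t Q (?I j))" by (simp add: Psi_Pos)
      then have "a \<in> fst ` Q" unfolding prog_t_N by (rule lm_heads[OF fin card])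
      then show ?thesis using Pos by blast
    next
      case (NegL a)
      with l have "NegL a \<in> Psi H Q (?I j)" and na: "NegL a \<notin> Psi H Q {}" by simp_all
      then have aH: "a \<in> H" by (simp add: Psi_NegL)
      from aH na have "Pos a \<in> least_model (prog_tu H Q {})" by (simp add: Psi_NegL)
      then have "a \<in> fst ` Q" unfolding prog_tu_N by (rule lm_heads[OF fin card])
      then show ?thesis using NegL by blast
    qed
  qed
  have finX: "finite ?X" using fin by simp
  have cardX: "card ?X \<le> K + K"
  proof -
    have "card ?X \<le> card (Pos ` fst ` Q) + card (NegL ` fst ` Q)" by (rule card_Un_le)
    also have "\<dots> \<le> card (fst ` Q) + card (fst ` Q)" by (intro add_mono card_image_le fin)
    finally show ?thesis using card by simp
  qed
  have st: "?s (K + K + k) = ?s (K + K)" for k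
  proof (rule stab[where f = "Psi H Q" and X = ?X])
    show "?s (Suc j) = Psi H Q (?s j)" for j by simp
    show "?s j \<subseteq> ?s (Suc j)" for j by (rule Psi_iter_chain)
  qed (use bnd finX cardX in auto)
  let ?n = "K + K + 2"
  have fp: "Psi H Q (?I ?n) = ?I ?n"
  proof -
    have "Psi H Q (?I ?n) = ?s (K + K + 2)" by simp
    also have "\<dots> = ?s (K + K)" by (rule st)
    also have "\<dots> = ?s (K + K + 1)" by (rule st[symmetric])
    also have "\<dots> = ?I ?n" by simp
    finally show ?thesis .
  qed
  have cons: "consistent H (?I ?n)" by (rule Psi_iter_consistent)
  show ?thesis
    unfolding WF_def
  proof (rule the_equality)
    have "\<forall>J. consistent H J \<and> Psi H Q J = J \<longrightarrow> ?I ?n \<subseteq> J"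
      using Psi_iter_least by blast
    then show "consistent H (?I ?n) \<and> Psi H Q (?I ?n) = ?I ?n \<and> (\<forall>J. consistent H J \<and> Psi H Q J = J \<longrightarrow> ?I ?n \<subseteq> J)"
      using cons fp by simp
  next
    fix I' assume a: "consistent H I' \<and> Psi H Q I' = I' \<and> (\<forall>J. consistent H J \<and> Psi H Q J = J \<longrightarrow> I' \<subseteq> J)"
    then have "I' \<subseteq> ?I ?n" using cons fp by simp
    moreover have "?I ?n \<subseteq> I'" using a Psi_iter_least[of H I' Q ?n] by simp
    ultimately show "I' = ?I ?n" by (rule subset_antisym)
  qed
qed

lemma sym_iter:
  assumes ok: "hok H G" and fin: "finite (fst ` Qof M va G)" and card: "card (fst ` Qof M va G) \<le> K"
  shows "\<forall>a\<in>H. (sat M va (fst ((psi G K ^^ j) (\<lambda>_. Neg Tru, \<lambda>_. Neg Tru)) a) \<longleftrightarrow> Pos a \<in> (Psi H (Qof M va G) ^^ j) {})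
     \<and> (sat M va (snd ((psi G K ^^ j) (\<lambda>_. Neg Tru, \<lambda>_. Neg Tru)) a) \<longleftrightarrow> NegL a \<in> (Psi H (Qof M va G) ^^ j) {})"
proof (induction j)
  case 0 then show ?case by simp
next
  case (Suc j)
  let ?Q = "Qof M va G"
  let ?st = "(psi G K ^^ j) (\<lambda>_. Neg Tru, \<lambda>_. Neg Tru)"
  let ?I = "(Psi H ?Q ^^ j) {}"
  have e: "(psi G K ^^ Suc j) (\<lambda>_. Neg Tru, \<lambda>_. Neg Tru) = psi G K ?st" by simp
  have n1: "\<forall>x\<in>H. sat M va (snd ?st x) \<longleftrightarrow> x \<in> {x. NegL x \<in> ?I}" using Suc by blast
  have n2: "\<forall>x\<in>H. sat M va (Neg (fst ?st x)) \<longleftrightarrow> x \<in> {x. x \<in> H \<and> Pos x \<notin> ?I}" using Suc by auto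
  show ?case
  proof (intro ballI conjI)
    fix a assume aH: "a \<in> H"
    have "sat M va (fst (psi G K ?st) a) \<longleftrightarrow> sat M va (deriv G (snd ?st) K a)" by (simp add: psi_def)
    also have "\<dots> \<longleftrightarrow> a \<in> (tp ?Q {x. NegL x \<in> ?I} ^^ K) {}"
      using sat_deriv[OF ok n1] by blast
    also have "\<dots> \<longleftrightarrow> Pos a \<in> least_model (prog_t ?Q ?I)"
      unfolding prog_t_N using lm_progN[OF fin card] by blast
    also have "\<dots> \<longleftrightarrow> Pos a \<in> Psi H ?Q ?I" using aH by (simp add: Psi_Pos)
    finally show "sat M va (fst ((psi G K ^^ Suc j) (\<lambda>_. Neg Tru, \<lambda>_. Neg Tru)) a) \<longleftrightarrow> Pos a \<in> (Psi H ?Q ^^ Suc j) {}"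
      by simp
  next
    fix a assume aH: "a \<in> H"
    have "sat M va (snd (psi G K ?st) a) \<longleftrightarrow> \<not> sat M va (deriv G (\<lambda>x. Neg (fst ?st x)) K a)" by (simp add: psi_def)
    also have "\<dots> \<longleftrightarrow> a \<notin> (tp ?Q {x. x \<in> H \<and> Pos x \<notin> ?I} ^^ K) {}"
      using sat_deriv[OF ok n2] by blast
    also have "\<dots> \<longleftrightarrow> Pos a \<notin> least_model (prog_tu H ?Q ?I)"
      unfolding prog_tu_N using lm_progN[OF fin card] by blast
    also have "\<dots> \<longleftrightarrow> NegL a \<in> Psi H ?Q ?I" using aH by (simp add: Psi_NegL)
    finally show "sat M va (snd ((psi G K ^^ Suc j) (\<lambda>_. Neg Tru, \<lambda>_. Neg Tru)) a) \<longleftrightarrow> NegL a \<in> (Psi H ?Q ^^ Suc j) {}"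
      by simp
  qed
qed


definition good :: "nat set \<Rightarrow> fm set \<Rightarrow> fm \<Rightarrow> bool" where
  "good F Cs f \<longleftrightarrow> f \<in> Cs \<and> fm_free f = {} \<and> fm_consts f \<subseteq> F"

locale cset =
  fixes F :: "nat set" and Cs :: "fm set"
  assumes C_true: "Tru \<in> Cs"
    and C_eq: "\<forall>s t. Eq s t \<in> Cs"
    and C_neg: "\<forall>f\<in>Cs. Neg f \<in> Cs"
    and C_conj: "\<forall>f\<in>Cs. \<forall>g\<in>Cs. Conj f g \<in> Cs"
    and C_disj: "\<forall>f\<in>Cs. \<forall>g\<in>Cs. Disj f g \<in> Cs"
    and C_ex: "\<forall>x. \<forall>f\<in>Cs. Ex x f \<in> Cs"
begin

lemma good_Tru: "good F Cs Tru" using C_true by (simp add: good_def)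
lemma good_Neg: "good F Cs f \<Longrightarrow> good F Cs (Neg f)" using C_neg by (simp add: good_def)
lemma good_Conj: "good F Cs f \<Longrightarrow> good F Cs g \<Longrightarrow> good F Cs (Conj f g)" using C_conj by (simp add: good_def)
lemma good_Disj: "good F Cs f \<Longrightarrow> good F Cs g \<Longrightarrow> good F Cs (Disj f g)" using C_disj by (simp add: good_def)

lemma good_bodyf: "(\<forall>l. good F Cs (val l)) \<Longrightarrow> good F Cs (bodyf val b)"
proof -
  assume v: "\<forall>l. good F Cs (val l)"
  have "good F Cs acc \<Longrightarrow> good F Cs (foldl (\<lambda>acc l. Conj (val l) acc) acc b)" for acc
    using v by (induction b arbitrary: acc) (auto intro: good_Conj)
  then show ?thesis by (simp add: bodyf_def good_Tru)
qed

lemma good_dstep: "(\<forall>g\<in>set G. good F Cs (fst (snd g))) \<Longrightarrow> (\<forall>a. good F Cs (d a)) \<Longrightarrow> (\<forall>a. good F Cs (nv a))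
  \<Longrightarrow> good F Cs (dstep G nv d a)"
proof -
  assume gG: "\<forall>g\<in>set G. good F Cs (fst (snd g))" and gd: "\<forall>a. good F Cs (d a)" and gn: "\<forall>a. good F Cs (nv a)"
  have lv: "\<forall>l. good F Cs (litv d nv l)" using gd gn by (auto simp: litv_def split: lit.splits)
  have "good F Cs acc \<Longrightarrow> set G' \<subseteq> set G \<Longrightarrow> good F Cs (foldl (\<lambda>acc r. if fst r = a then Disj (Conj (fst (snd r)) (bodyf (litv d nv) (snd (snd r)))) acc else acc) acc G')" for acc G'
    using gG lv by (induction G' arbitrary: acc) (auto intro!: good_Disj good_Conj good_bodyf)
  then show ?thesis by (simp add: dstep_def good_Neg good_Tru)
qed

lemma good_deriv: "(\<forall>g\<in>set G. good F Cs (fst (snd g))) \<Longrightarrow> (\<forall>a. good F Cs (nv a)) \<Longrightarrow> good F Cs (deriv G nv k a)"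
proof -
  assume gG: "\<forall>g\<in>set G. good F Cs (fst (snd g))" and gn: "\<forall>a. good F Cs (nv a)"
  have "\<forall>a. good F Cs ((dstep G nv ^^ k) (\<lambda>_. Neg Tru) a)"
    by (induction k) (auto intro: good_Neg good_Tru good_dstep[OF gG _ gn])
  then show ?thesis by (simp add: deriv_def)
qed

lemma good_iter: "(\<forall>g\<in>set G. good F Cs (fst (snd g))) \<Longrightarrow>
  (\<forall>a. good F Cs (fst ((psi G K ^^ n) (\<lambda>_. Neg Tru, \<lambda>_. Neg Tru)) a)) \<and>
  (\<forall>a. good F Cs (snd ((psi G K ^^ n) (\<lambda>_. Neg Tru, \<lambda>_. Neg Tru)) a))"
proof (induction n)
  case 0 then show ?case by (simp add: good_Neg good_Tru)
next
  case (Suc n)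
  then show ?case by (auto simp: psi_def intro!: good_deriv good_Neg)
qed

lemma good_wrap: "good F Cs (wrap l c)" if "c \<in> Cs" "fm_free c \<subseteq> fst ` set l" "fm_consts c \<subseteq> F" "\<forall>x\<in>set l. snd x \<in> F"
proof -
  have "wrap l c \<in> Cs"
  proof -
    have "acc \<in> Cs \<Longrightarrow> foldl (\<lambda>acc x. Ex (fst x) (Conj (Eq (V (fst x)) (C (snd x))) acc)) acc l \<in> Cs" for acc
      using C_ex C_conj C_eq by (induction l arbitrary: acc) auto
    then show ?thesis using that by (simp add: wrap_def)
  qed
  moreover have "fm_consts (wrap l c) = fm_consts c \<union> snd ` set l"
    unfolding wrap_def by (induction l arbitrary: c) auto
  ultimately show ?thesis using that by (auto simp: good_def fm_free_wrap)
qed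

end

lemma ground_ratom_subst:
  assumes "\<forall>x\<in>rvars a. x \<in> fst ` set l" "\<forall>x\<in>set l. snd x \<in> F" "ratom_consts a \<subseteq> F"
  shows "ground_ratom F (ratom_subst (sig l) a)"
proof (cases a)
  case (RA p ts)
  have "\<exists>c\<in>F. trm_subst (sig l) t = C c" if "t \<in> set ts" for t
  proof (cases t)
    case (V x)
    then have "x \<in> fst ` set l" using assms(1) RA that by auto
    then have "(x, alookup l x) \<in> set l" by (rule alookup_mem)
    then show ?thesis using V assms(2) by (auto simp: sig_def)
  next
    case (C c)
    then have "c \<in> ratom_consts a" using RA that by force
    then show ?thesis using assms(3) C by auto
  qed
  then show ?thesis using RA by (auto simp: ground_ratom_def)
qed

lemma lit_atom_subst: "lit_atom (lit_subst \<sigma> l) = ratom_subst \<sigma> (lit_atom l)"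
  by (cases l) auto

lemma grules_props:
  assumes hp: "hybrid_program F Cs P" and Fl: "set Fl = F" and g: "g \<in> set (grules Fl P)"
  shows "fst g \<in> herbrand_base F"
    and "\<forall>l\<in>set (snd (snd g)). lit_atom l \<in> herbrand_base F"
    and "\<exists>c l. fst (snd g) = wrap l c \<and> c \<in> Cs \<and> fm_free c \<subseteq> fst ` set l \<and> fm_consts c \<subseteq> F \<and> (\<forall>x\<in>set l. snd x \<in> F)"
proof -
  from g obtain r l where r: "r \<in> set P" and l: "l \<in> set (allth Fl (Suc (enc_rule r)))" and ge: "g = ground r l"
    unfolding set_grules by blast
  obtain h c b where re: "r = (h, c, b)" by (cases r) auto
  let ?B = "enc_rule (h, c, b)"
  have keys: "fst ` set l = {..<Suc ?B}" using allth_keys l re by auto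
  have vals: "\<forall>x\<in>set l. snd x \<in> F" using l Fl by (simp add: set_allth)
  have rc: "rule_consts r \<subseteq> F" "c \<in> Cs" using hp r re by (auto simp: hybrid_program_def)
  have hc: "ratom_consts h \<subseteq> F" "fm_consts c \<subseteq> F" "\<forall>l\<in>set b. ratom_consts (lit_atom l) \<subseteq> F"
    using rc re by (auto simp: rule_consts_def)
  have bnd: "\<And>x. x \<in> rvars h \<or> x \<in> fm_free c \<or> (\<exists>l\<in>set b. x \<in> rvars (lit_atom l)) \<Longrightarrow> x \<in> fst ` set l"
    using rule_bound keys by (metis lessThan_iff less_Suc_eq_le)
  show "fst g \<in> herbrand_base F"
    unfolding herbrand_base_def ge re ground_def using bnd vals hc
    by (auto intro!: ground_ratom_subst)
  show "\<forall>l'\<in>set (snd (snd g)). lit_atom l' \<in> herbrand_base F"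
    unfolding herbrand_base_def ge re ground_def using bnd vals hc
    by (auto simp: lit_atom_subst intro!: ground_ratom_subst)
  show "\<exists>c' l'. fst (snd g) = wrap l' c' \<and> c' \<in> Cs \<and> fm_free c' \<subseteq> fst ` set l' \<and> fm_consts c' \<subseteq> F \<and> (\<forall>x\<in>set l'. snd x \<in> F)"
  proof (intro exI[of _ c] exI[of _ l] conjI)
    show "fst (snd g) = wrap l c" using ge re by (simp add: ground_def)
    show "fm_free c \<subseteq> fst ` set l" using bnd by blast
  qed (use rc hc vals in auto)
qed


lemma holds_closed: "fm_free f = {} \<Longrightarrow> holds M f \<longleftrightarrow> sat M va f"
  unfolding holds_def using sat_agree[of f _ va M] by auto

lemma phi_sem:
  assumes cs: "cset Cs" and hp: "hybrid_program F Cs P" and Fl: "set Fl = F" "Fl \<noteq> []"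
    and A: "ground_ratom F A"
  shows "good F Cs (fst (phi Fl P) A)" "good F Cs (snd (phi Fl P) A)"
    "sat M va (fst (phi Fl P) A) \<longleftrightarrow> Pos A \<in> WF (herbrand_base F) (reduct F P M)"
    "sat M va (snd (phi Fl P) A) \<longleftrightarrow> NegL A \<in> WF (herbrand_base F) (reduct F P M)"
proof -
  let ?G = "grules Fl P"
  let ?K = "list_encode (map enc_rule ?G)"
  let ?H = "herbrand_base F"
  have ph: "phi Fl P = (psi ?G ?K ^^ (?K + ?K + 2)) (\<lambda>_. Neg Tru, \<lambda>_. Neg Tru)"
    by (simp add: phi_def Let_def)
  have hok: "hok ?H ?G" using grules_props(1,2)[OF hp Fl(1)] by (auto simp: hok_def)
  have gG: "\<forall>g\<in>set ?G. good F Cs (fst (snd g))"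
  proof
    fix g assume "g \<in> set ?G"
    from grules_props(3)[OF hp Fl(1) this] obtain c l where
      "fst (snd g) = wrap l c" "c \<in> Cs" "fm_free c \<subseteq> fst ` set l" "fm_consts c \<subseteq> F" "\<forall>x\<in>set l. snd x \<in> F"
      by blast
    then show "good F Cs (fst (snd g))" using cset.good_wrap[OF cs] by simp
  qed
  have red: "reduct F P M = Qof M va ?G"
  proof -
    have "reduct (set Fl) P M = {(fst g, snd (snd g)) | g. g \<in> set ?G \<and> holds M (fst (snd g))}"
      by (rule reduct_grules[OF Fl(2)])
    also have "\<dots> = Qof M va ?G"
    proof -
      have eq: "\<forall>g\<in>set ?G. holds M (fst (snd g)) = sat M va (fst (snd g))"
        using gG holds_closed[of _ M va] by (simp add: good_def)
      show ?thesis unfolding Qof_def by (rule Collect_cong) (use eq in blast)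
    qed
    finally show ?thesis using Fl by simp
  qed
  have sub: "fst ` Qof M va ?G \<subseteq> fst ` set ?G"
  proof
    fix x assume "x \<in> fst ` Qof M va ?G"
    then obtain q where q: "q \<in> Qof M va ?G" "x = fst q" by blast
    then obtain g where g: "g \<in> set ?G" "q = (fst g, snd (snd g))" unfolding Qof_def by blast
    then have "x = fst g" using q by simp
    then show "x \<in> fst ` set ?G" by (rule rev_image_eqI[OF g(1)])
  qed
  have fin: "finite (fst ` Qof M va ?G)" using sub finite_subset by blast
  have card: "card (fst ` Qof M va ?G) \<le> ?K"
  proof -
    have "card (fst ` Qof M va ?G) \<le> card (fst ` set ?G)" using sub by (intro card_mono) auto
    also have "\<dots> \<le> card (set ?G)" by (rule card_image_le) simp
    also have "\<dots> \<le> length ?G" by (rule card_length)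
    also have "\<dots> \<le> ?K" using list_encode_ge_length[of "map enc_rule ?G"] by simp
    finally show ?thesis .
  qed
  have AH: "A \<in> ?H" using A by (simp add: herbrand_base_def)
  have wf: "WF ?H (Qof M va ?G) = (Psi ?H (Qof M va ?G) ^^ (?K + ?K + 2)) {}"
    by (rule WF_iter[OF fin card])
  note si = sym_iter[OF hok fin card, of "?K + ?K + 2", THEN bspec, OF AH]
  show "sat M va (fst (phi Fl P) A) \<longleftrightarrow> Pos A \<in> WF ?H (reduct F P M)"
    using si unfolding ph red wf by blast
  show "sat M va (snd (phi Fl P) A) \<longleftrightarrow> NegL A \<in> WF ?H (reduct F P M)"
    using si unfolding ph red wf by blast
  have gi: "(\<forall>a. good F Cs (fst ((psi ?G ?K ^^ (?K + ?K + 2)) (\<lambda>_. Neg Tru, \<lambda>_. Neg Tru)) a)) \<and>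
    (\<forall>a. good F Cs (snd ((psi ?G ?K ^^ (?K + ?K + 2)) (\<lambda>_. Neg Tru, \<lambda>_. Neg Tru)) a))"
    by (rule cset.good_iter[OF cs gG])
  show "good F Cs (fst (phi Fl P) A)" "good F Cs (snd (phi Fl P) A)" using gi unfolding ph by blast+
qed

lemma decide_sel:
  fixes D :: "'d itself"
  assumes cs: "cset Constr" and Fl: "set Fl = F" "Fl \<noteq> []"
    and fo: "\<forall>n\<in>enc_fm ` closed_constraints F Constr. recf_eval fo [n]
       (if n \<in> enc_fm ` {c \<in> closed_constraints F Constr. entails D T c} then 1 else 0)"
    and wfs: "wfe (Suc 0) sel"
    and sel: "\<And>a b. eval sel [prod_encode (a, b)] = selN (a, b)"
    and selH: "\<And>t f R. selN (tab t R, tab f R) = tab (selH (t, f)) R"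
    and sem: "\<And>P A (M :: 'd struct) va. hybrid_program F Constr P \<Longrightarrow> ground_ratom F A \<Longrightarrow>
        good F Constr (selH (phi Fl P) A) \<and>
        (sat M va (selH (phi Fl P) A) \<longleftrightarrow> L A \<in> WF (herbrand_base F) (reduct F P M))"
  shows "decidable_on ((\<lambda>(P, A). enc_input P A) ` valid_inputs F Constr)
           ((\<lambda>(P, A). enc_input P A) ` {(P, A) \<in> valid_inputs F Constr. models_wf D F P T (L A)})"
proof -
  obtain r where r: "comp_by (Suc 0) r (e_phi sel Fl)" using compile[of "Suc 0" "e_phi sel Fl"] wfs by auto
  show ?thesis
    unfolding decidable_on_def
  proof (intro exI[of _ "Comp fo [r]"] ballI)
    fix n assume "n \<in> (\<lambda>(P, A). enc_input P A) ` valid_inputs F Constr"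
    then obtain P A where n: "n = enc_input P A" and v: "(P, A) \<in> valid_inputs F Constr" by auto
    from v have hp: "hybrid_program F Constr P" and A: "ground_ratom F A" by (auto simp: valid_inputs_def)
    let ?f = "selH (phi Fl P) A"
    have ev: "eval (e_phi sel Fl) [n] = enc_fm ?f"
      unfolding n by (rule ev_phi_gen) (use sel selH in auto)
    have "recf_eval r [n] (eval (e_phi sel Fl) [n])" using r by (simp add: comp_by_def)
    then have rr: "recf_eval r [n] (enc_fm ?f)" using ev by simp
    have gd: "good F Constr ?f" using sem[OF hp A] by blast
    then have cl: "?f \<in> closed_constraints F Constr" by (simp add: good_def closed_constraints_def)
    have ent: "entails D T ?f \<longleftrightarrow> models_wf D F P T (L A)"
    proof -
      have "holds M ?f \<longleftrightarrow> L A \<in> WF (herbrand_base F) (reduct F P M)" for M :: "'d struct"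
        unfolding holds_def using sem[OF hp A, of M] by blast
      then show ?thesis by (simp add: entails_def models_wf_def true3_def)
    qed
    have m1: "enc_fm ?f \<in> enc_fm ` {c \<in> closed_constraints F Constr. entails D T c} \<longleftrightarrow> entails D T ?f"
      using cl by auto
    have m2: "n \<in> (\<lambda>(P, A). enc_input P A) ` {(P, A) \<in> valid_inputs F Constr. models_wf D F P T (L A)}
       \<longleftrightarrow> models_wf D F P T (L A)"
      using v unfolding n by (auto simp: enc_input_eq)
    have fr: "recf_eval fo [enc_fm ?f] (if entails D T ?f then 1 else 0)"
      using fo cl m1 by force
    show "recf_eval (Comp fo [r]) [n]
      (if n \<in> (\<lambda>(P, A). enc_input P A) ` {(P, A) \<in> valid_inputs F Constr. models_wf D F P T (L A)} then 1 else 0)"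
      unfolding m2 ent[symmetric]
      by (rule recf_eval.comp[where ys = "[enc_fm ?f]"]) (use rr fr in auto)
  qed
qed

theorem mainTheorem1:
  fixes F :: "nat set" and Constr :: "fm set" and T :: "fm set" and D :: "'d itself"
  assumes F_fin: "finite F" and F_ne: "F \<noteq> {}"
    and T_lang: "\<forall>f\<in>T. fm_consts f \<subseteq> F"
    and T_distinct: "\<forall>c\<in>F. \<forall>d\<in>F. c \<noteq> d \<longrightarrow> Neg (Eq (C c) (C d)) \<in> T"
    and T_dca: "\<exists>x cs. set cs = F \<and> dca x cs \<in> T"
    and C_true: "Tru \<in> Constr"
    and C_eq: "\<forall>s t. Eq s t \<in> Constr"
    and C_neg: "\<forall>f\<in>Constr. Neg f \<in> Constr"
    and C_conj: "\<forall>f\<in>Constr. \<forall>g\<in>Constr. Conj f g \<in> Constr"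
    and C_disj: "\<forall>f\<in>Constr. \<forall>g\<in>Constr. Disj f g \<in> Constr"
    and C_ex: "\<forall>x. \<forall>f\<in>Constr. Ex x f \<in> Constr"
    and T_dec: "decidable_on (enc_fm ` closed_constraints F Constr)
                  (enc_fm ` {c \<in> closed_constraints F Constr. entails D T c})"
  shows "decidable_on ((\<lambda>(P, A). enc_input P A) ` valid_inputs F Constr)
           ((\<lambda>(P, A). enc_input P A) ` {(P, A) \<in> valid_inputs F Constr. models_wf D F P T (Pos A)})
       \<and> decidable_on ((\<lambda>(P, A). enc_input P A) ` valid_inputs F Constr)
           ((\<lambda>(P, A). enc_input P A) ` {(P, A) \<in> valid_inputs F Constr. models_wf D F P T (NegL A)})"
proof -
  have cs: "cset Constr" using C_true C_eq C_neg C_conj C_disj C_ex by unfold_locales auto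
  define Fl where "Fl = sorted_list_of_set F"
  have Fl: "set Fl = F" "Fl \<noteq> []" using F_fin F_ne by (auto simp: Fl_def)
  from T_dec obtain fo where fo: "\<forall>n\<in>enc_fm ` closed_constraints F Constr. recf_eval fo [n]
       (if n \<in> enc_fm ` {c \<in> closed_constraints F Constr. entails D T c} then 1 else 0)"
    unfolding decidable_on_def by blast
  show ?thesis
  proof
    show "decidable_on ((\<lambda>(P, A). enc_input P A) ` valid_inputs F Constr)
           ((\<lambda>(P, A). enc_input P A) ` {(P, A) \<in> valid_inputs F Constr. models_wf D F P T (Pos A)})"
    proof (rule decide_sel[OF cs Fl fo, where sel = e_fst and selN = fst and selH = fst])
      fix P A and M :: "'d struct" and va
      assume hp: "hybrid_program F Constr P" and A: "ground_ratom F A"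
      show "good F Constr (fst (phi Fl P) A) \<and> (sat M va (fst (phi Fl P) A) \<longleftrightarrow> Pos A \<in> WF (herbrand_base F) (reduct F P M))"
        using phi_sem(1,3)[OF cs hp Fl A] by blast
    qed simp_all
    show "decidable_on ((\<lambda>(P, A). enc_input P A) ` valid_inputs F Constr)
           ((\<lambda>(P, A). enc_input P A) ` {(P, A) \<in> valid_inputs F Constr. models_wf D F P T (NegL A)})"
    proof (rule decide_sel[OF cs Fl fo, where sel = e_snd and selN = snd and selH = snd])
      fix P A and M :: "'d struct" and va
      assume hp: "hybrid_program F Constr P" and A: "ground_ratom F A"
      show "good F Constr (snd (phi Fl P) A) \<and> (sat M va (snd (phi Fl P) A) \<longleftrightarrow> NegL A \<in> WF (herbrand_base F) (reduct F P M))"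
        using phi_sem(2,4)[OF cs hp Fl A] by blast
    qed simp_all
  qed
qed


end
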